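(* Suppose $K\supset\mathbb{Q}$, let $\mathcal{R}$ be a filtered $K$-SAC satisfying conditions (C2) and (C3), and let $D,D'$ be derivations of $\mathcal{R}$ each satisfying conditions (i)–(iii) below. Then: (1) if $[D,D']=0$, then $D+D'$ satisfies (i)–(iii) and $\exp(D+D')=\exp(D)\exp(D')$; (2) $\exp(D)\in\operatorname{Aut}\mathcal{R}$; (3) if $\exp(D)=\exp(D')$ in $\operatorname{Aut}\mathcal{R}$, then $D=D'$. Conditions: (i) $D\in F_0\operatorname{Der}\mathcal{R}$; (ii) for any objects $p_0,p_1$ there is a positive integer $\nu$ with $D^\nu=0$ on $\mathrm{gr}_1\mathcal{R}(p_0,p_1)=F_1\mathcal{R}(p_0,p_1)/F_2\mathcal{R}(p_0,p_1)$; (iii) $D(\mathcal{R}(p_0,p_1))\subset F_1\mathcal{R}(p_0,p_1)$ for all $p_0,p_1$.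
   Context: $K$ is a commutative ring with unit. A $K$-SAC is a small additive category $\mathcal{R}$ whose hom-sets $\mathcal{R}(p_0,p_1)$ are $K$-modules with $K$-bilinear multiplication $uv:=v\circ u$ ($u\in\mathcal{R}(p_0,p_1)$, $v\in\mathcal{R}(p_1,p_2)$), and such that whenever $\mathcal{R}(p_0,p_1)\ne0$ it contains an isomorphism. It is filtered if each $\mathcal{R}(p_0,p_1)$ has $K$-submodules $F_0=\mathcal{R}(p_0,p_1)\supset F_1\supset F_2\supset\cdots$ with $F_{n_1}\mathcal{R}(p_0,p_1)\cdot F_{n_2}\mathcal{R}(p_1,p_2)\subset F_{n_1+n_2}\mathcal{R}(p_0,p_2)$; $F_n=\mathcal{R}$ for $n<0$. (C2): for every object $q$ and $n\ge1$, the sum of multiplication and inclusion $F_1\mathcal{R}(q,q)^{\otimes n}\oplus F_{n+1}\mathcal{R}(q,q)\to F_n\mathcal{R}(q,q)$ is surjective. (C3): $\mathcal{R}(q,q)\to\varprojlim_n\mathcal{R}(q,q)/F_n\mathcal{R}(q,q)$ is an isomorphism for every $q$. A derivation is a family of $K$-linear maps $D:\mathcal{R}(p_0,p_1)\to\mathcal{R}(p_0,p_1)$ with $D(uv)=(Du)v+u(Dv)$; $F_n\operatorname{Der}\mathcal{R}$ is the set of derivations with $D(F_l\mathcal{R}(p_0,p_1))\subset F_{l+n}\mathcal{R}(p_0,p_1)$ for all $p_0,p_1$ and $l\ge0$. Under (C2), (C3) and (i)–(iii), $\exp(D)=\sum_{k\ge0}D^k/k!$ converges on each $\mathcal{R}(p_0,p_1)$.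 $\operatorname{Aut}\mathcal{R}$ is the group of functors $\mathcal{R}\to\mathcal{R}$ that are the identity on objects and $K$-linear isomorphisms on each $\mathcal{R}(p_0,p_1)$. *)

theory Defs
  imports Main
begin

text \<open>Morphisms live in a common type 'm;
  all operations are indexed by the source/target objects.
  mul p0 p1 p2 u v is the product uv = v o u for u : p0 -> p1, v : p1 -> p2.\<close>

record ('o, 'k, 'm) sac =
  Ob   :: "'o set"
  Hom  :: "'o \<Rightarrow> 'o \<Rightarrow> 'm set"
  add  :: "'o \<Rightarrow> 'o \<Rightarrow> 'm \<Rightarrow> 'm \<Rightarrow> 'm"
  zer  :: "'o \<Rightarrow> 'o \<Rightarrow> 'm"
  smult :: "'o \<Rightarrow> 'o \<Rightarrow> 'k \<Rightarrow> 'm \<Rightarrow> 'm"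
  mul  :: "'o \<Rightarrow> 'o \<Rightarrow> 'o \<Rightarrow> 'm \<Rightarrow> 'm \<Rightarrow> 'm"
  idm  :: "'o \<Rightarrow> 'm"
  Fil  :: "nat \<Rightarrow> 'o \<Rightarrow> 'o \<Rightarrow> 'm set"

definition kmodule_on ::
  "'m set \<Rightarrow> ('m \<Rightarrow> 'm \<Rightarrow> 'm) \<Rightarrow> 'm \<Rightarrow> ('k::comm_ring_1 \<Rightarrow> 'm \<Rightarrow> 'm) \<Rightarrow> bool" where
  "kmodule_on M ad z sm \<longleftrightarrow>
     z \<in> M \<and>
     (\<forall>x\<in>M. \<forall>y\<in>M. ad x y \<in> M) \<and>
     (\<forall>a. \<forall>x\<in>M. sm a x \<in> M) \<and>
     (\<forall>x\<in>M. \<forall>y\<in>M. \<forall>w\<in>M. ad (ad x y) w = ad x (ad y w)) \<and>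
     (\<forall>x\<in>M. \<forall>y\<in>M. ad x y = ad y x) \<and>
     (\<forall>x\<in>M. ad z x = x) \<and>
     (\<forall>x\<in>M. \<exists>y\<in>M. ad x y = z) \<and>
     (\<forall>a. \<forall>x\<in>M. \<forall>y\<in>M. sm a (ad x y) = ad (sm a x) (sm a y)) \<and>
     (\<forall>a b. \<forall>x\<in>M. sm (a + b) x = ad (sm a x) (sm b x)) \<and>
     (\<forall>a b. \<forall>x\<in>M. sm (a * b) x = sm a (sm b x)) \<and>
     (\<forall>x\<in>M. sm 1 x = x)"

definition submodule_on ::
  "'m set \<Rightarrow> ('m \<Rightarrow> 'm \<Rightarrow> 'm) \<Rightarrow> 'm \<Rightarrow> ('k \<Rightarrow> 'm \<Rightarrow> 'm) \<Rightarrow> 'm set \<Rightarrow> bool" where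
  "submodule_on M ad z sm N \<longleftrightarrow> N \<subseteq> M \<and> z \<in> N \<and>
     (\<forall>x\<in>N. \<forall>y\<in>N. ad x y \<in> N) \<and> (\<forall>a. \<forall>x\<in>N. sm a x \<in> N)"

definition is_KSAC :: "('o, 'k::comm_ring_1, 'm) sac \<Rightarrow> bool" where
  "is_KSAC R \<longleftrightarrow>
    (\<forall>p0\<in>Ob R. \<forall>p1\<in>Ob R.
        kmodule_on (Hom R p0 p1) (add R p0 p1) (zer R p0 p1) (smult R p0 p1)) \<and>
    (\<forall>p0\<in>Ob R. \<forall>p1\<in>Ob R. \<forall>p2\<in>Ob R. \<forall>u\<in>Hom R p0 p1. \<forall>v\<in>Hom R p1 p2.
        mul R p0 p1 p2 u v \<in> Hom R p0 p2) \<and>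
    (\<forall>p0\<in>Ob R. \<forall>p1\<in>Ob R. \<forall>p2\<in>Ob R. \<forall>p3\<in>Ob R.
       \<forall>u\<in>Hom R p0 p1. \<forall>v\<in>Hom R p1 p2. \<forall>w\<in>Hom R p2 p3.
        mul R p0 p2 p3 (mul R p0 p1 p2 u v) w = mul R p0 p1 p3 u (mul R p1 p2 p3 v w)) \<and>
    (\<forall>p\<in>Ob R. idm R p \<in> Hom R p p) \<and>
    (\<forall>p0\<in>Ob R. \<forall>p1\<in>Ob R. \<forall>u\<in>Hom R p0 p1.
        mul R p0 p0 p1 (idm R p0) u = u \<and> mul R p0 p1 p1 u (idm R p1) = u) \<and>
    (\<forall>p0\<in>Ob R. \<forall>p1\<in>Ob R. \<forall>p2\<in>Ob R. \<forall>u\<in>Hom R p0 p1. \<forall>u'\<in>Hom R p0 p1.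
       \<forall>v\<in>Hom R p1 p2. \<forall>v'\<in>Hom R p1 p2. \<forall>a.
        mul R p0 p1 p2 (add R p0 p1 u u') v
          = add R p0 p2 (mul R p0 p1 p2 u v) (mul R p0 p1 p2 u' v) \<and>
        mul R p0 p1 p2 u (add R p1 p2 v v')
          = add R p0 p2 (mul R p0 p1 p2 u v) (mul R p0 p1 p2 u v') \<and>
        mul R p0 p1 p2 (smult R p0 p1 a u) v = smult R p0 p2 a (mul R p0 p1 p2 u v) \<and>
        mul R p0 p1 p2 u (smult R p1 p2 a v) = smult R p0 p2 a (mul R p0 p1 p2 u v)) \<and>
    (\<forall>p0\<in>Ob R. \<forall>p1\<in>Ob R. Hom R p0 p1 \<noteq> {zer R p0 p1} \<longrightarrow>
        (\<exists>u\<in>Hom R p0 p1. \<exists>v\<in>Hom R p1 p0.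
           mul R p0 p1 p0 u v = idm R p0 \<and> mul R p1 p0 p1 v u = idm R p1))"

definition is_filtered :: "('o, 'k::comm_ring_1, 'm) sac \<Rightarrow> bool" where
  "is_filtered R \<longleftrightarrow>
    (\<forall>p0\<in>Ob R. \<forall>p1\<in>Ob R.
       Fil R 0 p0 p1 = Hom R p0 p1 \<and>
       (\<forall>n. submodule_on (Hom R p0 p1) (add R p0 p1) (zer R p0 p1) (smult R p0 p1) (Fil R n p0 p1)) \<and>
       (\<forall>n. Fil R (Suc n) p0 p1 \<subseteq> Fil R n p0 p1)) \<and>
    (\<forall>p0\<in>Ob R. \<forall>p1\<in>Ob R. \<forall>p2\<in>Ob R. \<forall>n1 n2. \<forall>u\<in>Fil R n1 p0 p1. \<forall>v\<in>Fil R n2 p1 p2.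
       mul R p0 p1 p2 u v \<in> Fil R (n1 + n2) p0 p2)"

definition hsub :: "('o, 'k::comm_ring_1, 'm) sac \<Rightarrow> 'o \<Rightarrow> 'o \<Rightarrow> 'm \<Rightarrow> 'm \<Rightarrow> 'm" where
  "hsub R p0 p1 x y = add R p0 p1 x (smult R p0 p1 (-1) y)"

fun lprod :: "('o, 'k, 'm) sac \<Rightarrow> 'o \<Rightarrow> 'm list \<Rightarrow> 'm" where
  "lprod R q [] = idm R q"
| "lprod R q [u] = u"
| "lprod R q (u # us) = mul R q q q u (lprod R q us)"

inductive_set finsums :: "('o, 'k, 'm) sac \<Rightarrow> 'o \<Rightarrow> 'o \<Rightarrow> 'm set \<Rightarrow> 'm set"
  for R p0 p1 S where
  "zer R p0 p1 \<in> finsums R p0 p1 S"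
| "x \<in> S \<Longrightarrow> y \<in> finsums R p0 p1 S \<Longrightarrow> add R p0 p1 x y \<in> finsums R p0 p1 S"

text \<open>(C2): the image of the multiplication map from the n-th tensor power of F1 R(q,q)
  is the set of finite sums of products u1...un with ui in F1.\<close>
definition cond_C2 :: "('o, 'k::comm_ring_1, 'm) sac \<Rightarrow> bool" where
  "cond_C2 R \<longleftrightarrow> (\<forall>q\<in>Ob R. \<forall>n\<ge>1. \<forall>x\<in>Fil R n q q.
     \<exists>s\<in>finsums R q q {lprod R q us | us. length us = n \<and> set us \<subseteq> Fil R 1 q q}.
     \<exists>y\<in>Fil R (n + 1) q q. x = add R q q s y)"

text \<open>(C3): R(q,q) -> lim R(q,q)/F_n R(q,q) is bijective.\<close>
definition cond_C3 :: "('o, 'k::comm_ring_1, 'm) sac \<Rightarrow> bool" where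
  "cond_C3 R \<longleftrightarrow> (\<forall>q\<in>Ob R.
     (\<forall>x\<in>Hom R q q. (\<forall>n. x \<in> Fil R n q q) \<longrightarrow> x = zer R q q) \<and>
     (\<forall>a::nat \<Rightarrow> 'm. (\<forall>n. a n \<in> Hom R q q) \<and>
         (\<forall>n m. n \<le> m \<longrightarrow> hsub R q q (a m) (a n) \<in> Fil R n q q) \<longrightarrow>
       (\<exists>x\<in>Hom R q q. \<forall>n. hsub R q q x (a n) \<in> Fil R n q q)))"

type_synonym ('o, 'm) famap = "'o \<Rightarrow> 'o \<Rightarrow> 'm \<Rightarrow> 'm"

definition is_klinear_fam :: "('o, 'k::comm_ring_1, 'm) sac \<Rightarrow> ('o, 'm) famap \<Rightarrow> bool" where
  "is_klinear_fam R D \<longleftrightarrow> (\<forall>p0\<in>Ob R. \<forall>p1\<in>Ob R.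
     (\<forall>u\<in>Hom R p0 p1. D p0 p1 u \<in> Hom R p0 p1) \<and>
     (\<forall>u\<in>Hom R p0 p1. \<forall>v\<in>Hom R p0 p1.
        D p0 p1 (add R p0 p1 u v) = add R p0 p1 (D p0 p1 u) (D p0 p1 v)) \<and>
     (\<forall>a. \<forall>u\<in>Hom R p0 p1. D p0 p1 (smult R p0 p1 a u) = smult R p0 p1 a (D p0 p1 u)))"

definition is_derivation :: "('o, 'k::comm_ring_1, 'm) sac \<Rightarrow> ('o, 'm) famap \<Rightarrow> bool" where
  "is_derivation R D \<longleftrightarrow> is_klinear_fam R D \<and>
     (\<forall>p0\<in>Ob R. \<forall>p1\<in>Ob R. \<forall>p2\<in>Ob R. \<forall>u\<in>Hom R p0 p1. \<forall>v\<in>Hom R p1 p2.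
        D p0 p2 (mul R p0 p1 p2 u v)
          = add R p0 p2 (mul R p0 p1 p2 (D p0 p1 u) v) (mul R p0 p1 p2 u (D p1 p2 v)))"

definition in_FDer :: "('o, 'k::comm_ring_1, 'm) sac \<Rightarrow> nat \<Rightarrow> ('o, 'm) famap \<Rightarrow> bool" where
  "in_FDer R n D \<longleftrightarrow> is_derivation R D \<and>
     (\<forall>p0\<in>Ob R. \<forall>p1\<in>Ob R. \<forall>l. \<forall>u\<in>Fil R l p0 p1. D p0 p1 u \<in> Fil R (l + n) p0 p1)"

definition cond_i_iii :: "('o, 'k::comm_ring_1, 'm) sac \<Rightarrow> ('o, 'm) famap \<Rightarrow> bool" where
  "cond_i_iii R D \<longleftrightarrow>
     in_FDer R 0 D \<and>
     (\<forall>p0\<in>Ob R. \<forall>p1\<in>Ob R. \<exists>\<nu>::nat. \<nu> > 0 \<and>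
         (\<forall>u\<in>Fil R 1 p0 p1. (D p0 p1 ^^ \<nu>) u \<in> Fil R 2 p0 p1)) \<and>
     (\<forall>p0\<in>Ob R. \<forall>p1\<in>Ob R. \<forall>u\<in>Hom R p0 p1. D p0 p1 u \<in> Fil R 1 p0 p1)"

definition der_add :: "('o, 'k, 'm) sac \<Rightarrow> ('o, 'm) famap \<Rightarrow> ('o, 'm) famap \<Rightarrow> ('o, 'm) famap" where
  "der_add R D D' = (\<lambda>p0 p1 u. add R p0 p1 (D p0 p1 u) (D' p0 p1 u))"

definition der_commute :: "('o, 'k, 'm) sac \<Rightarrow> ('o, 'm) famap \<Rightarrow> ('o, 'm) famap \<Rightarrow> bool" where
  "der_commute R D D' \<longleftrightarrow> (\<forall>p0\<in>Ob R. \<forall>p1\<in>Ob R. \<forall>u\<in>Hom R p0 p1.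
     D p0 p1 (D' p0 p1 u) = D' p0 p1 (D p0 p1 u))"

text \<open>1/n in K (for n invertible in K)\<close>
definition inv_nat :: "nat \<Rightarrow> 'k::comm_ring_1" where
  "inv_nat n = (SOME r. of_nat n * r = 1)"

fun exp_psum :: "('o, 'k::comm_ring_1, 'm) sac \<Rightarrow> ('o, 'm) famap \<Rightarrow> 'o \<Rightarrow> 'o \<Rightarrow> 'm \<Rightarrow> nat \<Rightarrow> 'm" where
  "exp_psum R D p0 p1 u 0 = zer R p0 p1"
| "exp_psum R D p0 p1 u (Suc N) =
     add R p0 p1 (exp_psum R D p0 p1 u N) (smult R p0 p1 (inv_nat (fact N)) ((D p0 p1 ^^ N) u))"

definition fil_converges_to :: "('o, 'k::comm_ring_1, 'm) sac \<Rightarrow> 'o \<Rightarrow> 'o \<Rightarrow> (nat \<Rightarrow> 'm) \<Rightarrow> 'm \<Rightarrow> bool" where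
  "fil_converges_to R p0 p1 s x \<longleftrightarrow>
     (\<forall>n. \<exists>N0. \<forall>N\<ge>N0. hsub R p0 p1 (s N) x \<in> Fil R n p0 p1)"

definition der_exp :: "('o, 'k::comm_ring_1, 'm) sac \<Rightarrow> ('o, 'm) famap \<Rightarrow> ('o, 'm) famap" where
  "der_exp R D = (\<lambda>p0 p1 u. THE x. x \<in> Hom R p0 p1 \<and>
      fil_converges_to R p0 p1 (exp_psum R D p0 p1 u) x)"

text \<open>Aut R: functors identity on objects, K-linear isomorphisms on each hom-module\<close>
definition is_Aut :: "('o, 'k::comm_ring_1, 'm) sac \<Rightarrow> ('o, 'm) famap \<Rightarrow> bool" where
  "is_Aut R F \<longleftrightarrow> is_klinear_fam R F \<and>
     (\<forall>p0\<in>Ob R. \<forall>p1\<in>Ob R. bij_betw (F p0 p1) (Hom R p0 p1) (Hom R p0 p1)) \<and>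
     (\<forall>p0\<in>Ob R. \<forall>p1\<in>Ob R. \<forall>p2\<in>Ob R. \<forall>u\<in>Hom R p0 p1. \<forall>v\<in>Hom R p1 p2.
        F p0 p2 (mul R p0 p1 p2 u v) = mul R p0 p1 p2 (F p0 p1 u) (F p1 p2 v)) \<and>
     (\<forall>p\<in>Ob R. F p p (idm R p) = idm R p)"

end

theory Submission
  imports Defs "HOL-Algebra.Ring"
begin

locale kmod = abelian_group G for G (structure) +
  fixes sm :: "'k::comm_ring_1 \<Rightarrow> 'a \<Rightarrow> 'a"
  assumes sm_closed[simp]: "x \<in> carrier G \<Longrightarrow> sm a x \<in> carrier G"
    and sm_add_r: "x \<in> carrier G \<Longrightarrow> y \<in> carrier G \<Longrightarrow> sm a (x \<oplus> y) = sm a x \<oplus> sm a y"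
    and sm_add_l: "x \<in> carrier G \<Longrightarrow> sm (a + b) x = sm a x \<oplus> sm b x"
    and sm_mult: "x \<in> carrier G \<Longrightarrow> sm (a * b) x = sm a (sm b x)"
    and sm_one[simp]: "x \<in> carrier G \<Longrightarrow> sm 1 x = x"
begin

lemma sm_zero_l[simp]: "x \<in> carrier G \<Longrightarrow> sm 0 x = \<zero>"
proof -
  assume x: "x \<in> carrier G"
  have "sm 0 x \<oplus> sm 0 x = sm 0 x \<oplus> \<zero>" using x sm_add_l[of x 0 0] by simp
  thus ?thesis using x by (metis a_comm add.r_cancel_one' sm_closed zero_closed)
qed

lemma sm_zero_r[simp]: "sm a \<zero> = \<zero>"
  by (metis mult_zero_right sm_mult sm_zero_l zero_closed)

lemma sm_neg1: "x \<in> carrier G \<Longrightarrow> sm (-1) x = \<ominus> x"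
proof -
  assume x: "x \<in> carrier G"
  have "sm (-1) x \<oplus> x = \<zero>" using x sm_add_l[of x "-1" 1] by simp
  thus ?thesis using x by (metis add.inv_equality sm_closed)
qed

lemma sm_inv: "x \<in> carrier G \<Longrightarrow> sm a (\<ominus> x) = \<ominus> sm a x"
  by (metis mult.commute sm_mult sm_neg1 sm_closed)

lemma sm_minus: "x \<in> carrier G \<Longrightarrow> y \<in> carrier G \<Longrightarrow> sm a (x \<ominus> y) = sm a x \<ominus> sm a y"
  by (simp add: a_minus_def sm_add_r sm_inv)

lemma sm_finsum: "finite A \<Longrightarrow> f \<in> A \<rightarrow> carrier G \<Longrightarrow> sm a (finsum G f A) = finsum G (\<lambda>i. sm a (f i)) A"
proof (induction A rule: finite_induct)
  case empty then show ?case by simp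
next
  case (insert x F)
  then show ?case by (simp add: finsum_insert sm_add_r Pi_def)
qed

definition submod :: "'a set \<Rightarrow> bool" where
  "submod S \<longleftrightarrow> S \<subseteq> carrier G \<and> \<zero> \<in> S \<and> (\<forall>x\<in>S. \<forall>y\<in>S. x \<oplus> y \<in> S) \<and> (\<forall>a. \<forall>x\<in>S. sm a x \<in> S)"

lemma submodD:
  assumes "submod S"
  shows "S \<subseteq> carrier G" "\<zero> \<in> S" "x\<in>S \<Longrightarrow> y\<in>S \<Longrightarrow> x \<oplus> y \<in> S" "x\<in>S \<Longrightarrow> sm a x \<in> S"
  using assms unfolding submod_def by auto

lemma submod_inv: "submod S \<Longrightarrow> x \<in> S \<Longrightarrow> \<ominus> x \<in> S"
  by (metis sm_neg1 submodD(1,4) subsetD)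

lemma submod_minus: "submod S \<Longrightarrow> x \<in> S \<Longrightarrow> y \<in> S \<Longrightarrow> x \<ominus> y \<in> S"
  by (simp add: a_minus_def submodD(3) submod_inv)

lemma submod_finsum: assumes S: "submod S" shows "finite A \<Longrightarrow> (\<And>i. i \<in> A \<Longrightarrow> f i \<in> S) \<Longrightarrow> finsum G f A \<in> S"
proof (induction A rule: finite_induct)
  case empty then show ?case using S by (simp add: submodD(2))
next
  case (insert x F)
  have "f \<in> insert x F \<rightarrow> carrier G" using insert submodD(1)[OF S] by blast
  then show ?case using insert S by (simp add: finsum_insert submodD(3))
qed

lemma cg_refl: "submod S \<Longrightarrow> x \<in> carrier G \<Longrightarrow> x \<ominus> x \<in> S"
  by (simp add: a_minus_def r_neg submodD(2))

lemma cg_sym: "submod S \<Longrightarrow> x \<in> carrier G \<Longrightarrow> y \<in> carrier G \<Longrightarrow> x \<ominus> y \<in> S \<Longrightarrow> y \<ominus> x \<in> S"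
proof -
  assume h: "submod S" "x \<in> carrier G" "y \<in> carrier G" "x \<ominus> y \<in> S"
  have "y \<ominus> x = \<ominus> (x \<ominus> y)" using h by (simp add: a_minus_def minus_add a_comm)
  thus ?thesis using h submod_inv by simp
qed

lemma cg_trans: "submod S \<Longrightarrow> x \<in> carrier G \<Longrightarrow> y \<in> carrier G \<Longrightarrow> z \<in> carrier G \<Longrightarrow>
   x \<ominus> y \<in> S \<Longrightarrow> y \<ominus> z \<in> S \<Longrightarrow> x \<ominus> z \<in> S"
proof -
  assume S: "submod S" and c: "x \<in> carrier G" "y \<in> carrier G" "z \<in> carrier G"
    and h: "x \<ominus> y \<in> S" "y \<ominus> z \<in> S"
  have "x \<ominus> z = (x \<ominus> y) \<oplus> (y \<ominus> z)" using c
    by (simp add: a_minus_def a_assoc) (simp add: a_assoc[symmetric] l_neg)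
  thus ?thesis using h S submodD(3) by simp
qed

lemma cg_add: "submod S \<Longrightarrow> x \<in> carrier G \<Longrightarrow> y \<in> carrier G \<Longrightarrow> x' \<in> carrier G \<Longrightarrow> y' \<in> carrier G \<Longrightarrow>
   x \<ominus> x' \<in> S \<Longrightarrow> y \<ominus> y' \<in> S \<Longrightarrow> (x \<oplus> y) \<ominus> (x' \<oplus> y') \<in> S"
proof -
  assume S: "submod S" and c: "x \<in> carrier G" "y \<in> carrier G" "x' \<in> carrier G" "y' \<in> carrier G"
    and h: "x \<ominus> x' \<in> S" "y \<ominus> y' \<in> S"
  have "(x \<oplus> y) \<ominus> (x' \<oplus> y') = (x \<ominus> x') \<oplus> (y \<ominus> y')" using c
    by (simp add: a_minus_def minus_add a_ac)
  thus ?thesis using h S submodD(3) by simp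
qed

lemma cg_sm: "submod S \<Longrightarrow> x \<in> carrier G \<Longrightarrow> y \<in> carrier G \<Longrightarrow> x \<ominus> y \<in> S \<Longrightarrow> sm a x \<ominus> sm a y \<in> S"
  by (metis sm_minus submodD(4))

lemma minus_zero_eq: "x \<in> carrier G \<Longrightarrow> y \<in> carrier G \<Longrightarrow> x \<ominus> y = \<zero> \<Longrightarrow> x = y"
  by (metis a_minus_def add.inv_equality add.inv_inv a_inv_closed a_comm)

lemma cg_add_small: "submod S \<Longrightarrow> x \<in> carrier G \<Longrightarrow> y \<in> carrier G \<Longrightarrow> t \<in> carrier G \<Longrightarrow>
   x \<ominus> y \<in> S \<Longrightarrow> t \<in> S \<Longrightarrow> (x \<oplus> t) \<ominus> y \<in> S"
proof -
  assume S: "submod S" and c: "x \<in> carrier G" "y \<in> carrier G" "t \<in> carrier G"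
    and h: "x \<ominus> y \<in> S" "t \<in> S"
  have "(x \<oplus> t) \<ominus> y = (x \<ominus> y) \<oplus> t" using c
    by (simp add: a_minus_def a_ac)
  thus ?thesis using h S submodD(3) by simp
qed

lemma finsum_split_sub:
  assumes "finite A" "B \<subseteq> A" "f \<in> A \<rightarrow> carrier G" "submod S" "\<And>i. i \<in> A - B \<Longrightarrow> f i \<in> S"
  shows "finsum G f A \<ominus> finsum G f B \<in> S"
proof -
  have fB: "finite B" using assms finite_subset by blast
  have A: "A = B \<union> (A - B)" using assms by blast
  have "finsum G f A = finsum G f B \<oplus> finsum G f (A - B)"
    using assms fB by (subst A, subst finsum_Un_disjoint) (auto simp: Pi_def)
  moreover have "finsum G f (A - B) \<in> S" using assms by (intro submod_finsum) auto
  moreover have "finsum G f (A - B) \<in> carrier G" using assms by (intro finsum_closed) auto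
  moreover have "finsum G f B \<in> carrier G" using assms by (intro finsum_closed) auto
  ultimately show ?thesis
    by (simp add: a_minus_def a_assoc a_comm[of "finsum G f B"] l_neg)
qed

end

lemma hom_finsum:
  assumes G: "abelian_group G" and H: "abelian_group H"
    and L: "\<And>x y. x \<in> carrier G \<Longrightarrow> y \<in> carrier G \<Longrightarrow> L (x \<oplus>\<^bsub>G\<^esub> y) = L x \<oplus>\<^bsub>H\<^esub> L y"
    and Lc: "\<And>x. x \<in> carrier G \<Longrightarrow> L x \<in> carrier H"
    and L0: "L \<zero>\<^bsub>G\<^esub> = \<zero>\<^bsub>H\<^esub>"
    and fin: "finite A" and f: "f \<in> A \<rightarrow> carrier G"
  shows "L (finsum G f A) = finsum H (\<lambda>i. L (f i)) A"
  using fin f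
proof (induction A rule: finite_induct)
  case empty then show ?case using G H L0 by (simp add: abelian_monoid.finsum_empty abelian_group.axioms)
next
  case (insert x F)
  interpret G: abelian_group G by fact
  interpret H: abelian_group H by fact
  have fc: "f \<in> F \<rightarrow> carrier G" "f x \<in> carrier G" using insert by auto
  have "L (finsum G f (insert x F)) = L (f x \<oplus>\<^bsub>G\<^esub> finsum G f F)"
    using insert fc by (simp add: G.finsum_insert)
  also have "\<dots> = L (f x) \<oplus>\<^bsub>H\<^esub> L (finsum G f F)"
    using L[OF fc(2) G.finsum_closed[OF fc(1)]] .
  also have "\<dots> = finsum H (\<lambda>i. L (f i)) (insert x F)"
    using insert fc Lc by (subst H.finsum_insert) (auto simp: Pi_def)
  finally show ?case .
qed


definition HG :: "('o, 'k::comm_ring_1, 'm) sac \<Rightarrow> 'o \<Rightarrow> 'o \<Rightarrow> 'm ring" where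
  "HG R p0 p1 = \<lparr>carrier = Hom R p0 p1, mult = (\<lambda>x y. x), one = zer R p0 p1,
      ring.zero = zer R p0 p1, ring.add = sac.add R p0 p1\<rparr>"

lemma HG_simps[simp]: "carrier (HG R p0 p1) = Hom R p0 p1" "ring.zero (HG R p0 p1) = zer R p0 p1"
  "ring.add (HG R p0 p1) = sac.add R p0 p1"
  by (simp_all add: HG_def)

context
  fixes M ad z and sm :: "'k::comm_ring_1 \<Rightarrow> 'm \<Rightarrow> 'm"
  assumes K: "kmodule_on M ad z sm"
begin
lemma kmD1: "z \<in> M"
  using conjunct1[OF K[unfolded kmodule_on_def]] by auto
lemma kmD2: "x \<in> M \<Longrightarrow> y \<in> M \<Longrightarrow> ad x y \<in> M"
  using conjunct1[OF conjunct2[OF K[unfolded kmodule_on_def]]] by auto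
lemma kmD3: "x \<in> M \<Longrightarrow> sm a x \<in> M"
  using conjunct1[OF conjunct2[OF conjunct2[OF K[unfolded kmodule_on_def]]]] by auto
lemma kmD4: "x \<in> M \<Longrightarrow> y \<in> M \<Longrightarrow> w \<in> M \<Longrightarrow> ad (ad x y) w = ad x (ad y w)"
  using conjunct1[OF conjunct2[OF conjunct2[OF conjunct2[OF K[unfolded kmodule_on_def]]]]] by auto
lemma kmD5: "x \<in> M \<Longrightarrow> y \<in> M \<Longrightarrow> ad x y = ad y x"
  using conjunct1[OF conjunct2[OF conjunct2[OF conjunct2[OF conjunct2[OF K[unfolded kmodule_on_def]]]]]] by auto
lemma kmD6: "x \<in> M \<Longrightarrow> ad z x = x"
  using conjunct1[OF conjunct2[OF conjunct2[OF conjunct2[OF conjunct2[OF conjunct2[OF K[unfolded kmodule_on_def]]]]]]] by auto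
lemma kmD7: "x \<in> M \<Longrightarrow> \<exists>y\<in>M. ad x y = z"
  using conjunct1[OF conjunct2[OF conjunct2[OF conjunct2[OF conjunct2[OF conjunct2[OF conjunct2[OF K[unfolded kmodule_on_def]]]]]]]] by auto
lemma kmD8: "x \<in> M \<Longrightarrow> y \<in> M \<Longrightarrow> sm a (ad x y) = ad (sm a x) (sm a y)"
  using conjunct1[OF conjunct2[OF conjunct2[OF conjunct2[OF conjunct2[OF conjunct2[OF conjunct2[OF conjunct2[OF K[unfolded kmodule_on_def]]]]]]]]] by auto
lemma kmD9: "x \<in> M \<Longrightarrow> sm (a + b) x = ad (sm a x) (sm b x)"
  using conjunct1[OF conjunct2[OF conjunct2[OF conjunct2[OF conjunct2[OF conjunct2[OF conjunct2[OF conjunct2[OF conjunct2[OF K[unfolded kmodule_on_def]]]]]]]]]] by auto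
lemma kmD10: "x \<in> M \<Longrightarrow> sm (a * b) x = sm a (sm b x)"
  using conjunct1[OF conjunct2[OF conjunct2[OF conjunct2[OF conjunct2[OF conjunct2[OF conjunct2[OF conjunct2[OF conjunct2[OF conjunct2[OF K[unfolded kmodule_on_def]]]]]]]]]]] by auto
lemma kmD11: "x \<in> M \<Longrightarrow> sm 1 x = x"
  using conjunct2[OF conjunct2[OF conjunct2[OF conjunct2[OF conjunct2[OF conjunct2[OF conjunct2[OF conjunct2[OF conjunct2[OF conjunct2[OF K[unfolded kmodule_on_def]]]]]]]]]]] by auto
end

locale sacl =
  fixes R :: "('o, 'k::comm_ring_1, 'm) sac"
  assumes KQ: "\<forall>n::nat. n > 0 \<longrightarrow> (\<exists>r::'k. of_nat n * r = 1)"
    and ksac: "is_KSAC R" and filt: "is_filtered R"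
    and C2: "cond_C2 R" and C3: "cond_C3 R"
begin

lemma KS: "(\<forall>p0\<in>Ob R. \<forall>p1\<in>Ob R.
        kmodule_on (Hom R p0 p1) (sac.add R p0 p1) (zer R p0 p1) (smult R p0 p1))"
  "(\<forall>p0\<in>Ob R. \<forall>p1\<in>Ob R. \<forall>p2\<in>Ob R. \<forall>u\<in>Hom R p0 p1. \<forall>v\<in>Hom R p1 p2.
        mul R p0 p1 p2 u v \<in> Hom R p0 p2)"
  "(\<forall>p0\<in>Ob R. \<forall>p1\<in>Ob R. \<forall>p2\<in>Ob R. \<forall>p3\<in>Ob R.
       \<forall>u\<in>Hom R p0 p1. \<forall>v\<in>Hom R p1 p2. \<forall>w\<in>Hom R p2 p3.
        mul R p0 p2 p3 (mul R p0 p1 p2 u v) w = mul R p0 p1 p3 u (mul R p1 p2 p3 v w))"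
  "(\<forall>p\<in>Ob R. idm R p \<in> Hom R p p)"
  "(\<forall>p0\<in>Ob R. \<forall>p1\<in>Ob R. \<forall>u\<in>Hom R p0 p1.
        mul R p0 p0 p1 (idm R p0) u = u \<and> mul R p0 p1 p1 u (idm R p1) = u)"
  "(\<forall>p0\<in>Ob R. \<forall>p1\<in>Ob R. \<forall>p2\<in>Ob R. \<forall>u\<in>Hom R p0 p1. \<forall>u'\<in>Hom R p0 p1.
       \<forall>v\<in>Hom R p1 p2. \<forall>v'\<in>Hom R p1 p2. \<forall>a.
        mul R p0 p1 p2 (sac.add R p0 p1 u u') v
          = sac.add R p0 p2 (mul R p0 p1 p2 u v) (mul R p0 p1 p2 u' v) \<and>
        mul R p0 p1 p2 u (sac.add R p1 p2 v v')
          = sac.add R p0 p2 (mul R p0 p1 p2 u v) (mul R p0 p1 p2 u v') \<and>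
        mul R p0 p1 p2 (smult R p0 p1 a u) v = smult R p0 p2 a (mul R p0 p1 p2 u v) \<and>
        mul R p0 p1 p2 u (smult R p1 p2 a v) = smult R p0 p2 a (mul R p0 p1 p2 u v))"
  "(\<forall>p0\<in>Ob R. \<forall>p1\<in>Ob R. Hom R p0 p1 \<noteq> {zer R p0 p1} \<longrightarrow>
        (\<exists>u\<in>Hom R p0 p1. \<exists>v\<in>Hom R p1 p0.
           mul R p0 p1 p0 u v = idm R p0 \<and> mul R p1 p0 p1 v u = idm R p1))"
  using ksac unfolding is_KSAC_def apply -
  apply (erule conjunct1)
  apply (erule conjunct1[OF conjunct2])
  apply (erule conjunct1[OF conjunct2[OF conjunct2]])
  apply (erule conjunct1[OF conjunct2[OF conjunct2[OF conjunct2]]])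
  apply (erule conjunct1[OF conjunct2[OF conjunct2[OF conjunct2[OF conjunct2]]]])
  apply (erule conjunct1[OF conjunct2[OF conjunct2[OF conjunct2[OF conjunct2[OF conjunct2]]]]])
  apply (erule conjunct2[OF conjunct2[OF conjunct2[OF conjunct2[OF conjunct2[OF conjunct2]]]]])
  done

lemma FS: "\<forall>p0\<in>Ob R. \<forall>p1\<in>Ob R.
       Fil R 0 p0 p1 = Hom R p0 p1 \<and>
       (\<forall>n. submodule_on (Hom R p0 p1) (sac.add R p0 p1) (zer R p0 p1) (smult R p0 p1) (Fil R n p0 p1)) \<and>
       (\<forall>n. Fil R (Suc n) p0 p1 \<subseteq> Fil R n p0 p1)"
  "\<forall>p0\<in>Ob R. \<forall>p1\<in>Ob R. \<forall>p2\<in>Ob R. \<forall>n1 n2. \<forall>u\<in>Fil R n1 p0 p1. \<forall>v\<in>Fil R n2 p1 p2.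
       mul R p0 p1 p2 u v \<in> Fil R (n1 + n2) p0 p2"
  using filt unfolding is_filtered_def apply -
  apply (erule conjunct1) apply (erule conjunct2) done

lemma kmHom: "p0 \<in> Ob R \<Longrightarrow> p1 \<in> Ob R \<Longrightarrow> kmodule_on (Hom R p0 p1) (sac.add R p0 p1) (zer R p0 p1) (smult R p0 p1)"
  using KS(1) by simp

lemma kmodHG: "p0 \<in> Ob R \<Longrightarrow> p1 \<in> Ob R \<Longrightarrow> kmod (HG R p0 p1) (smult R p0 p1)"
proof -
  assume o: "p0 \<in> Ob R" "p1 \<in> Ob R"
  have km: "kmodule_on (Hom R p0 p1) (sac.add R p0 p1) (zer R p0 p1) (smult R p0 p1)"
    using KS(1) o by simp
  let ?M = "Hom R p0 p1" and ?a = "sac.add R p0 p1" and ?z = "zer R p0 p1" and ?s = "smult R p0 p1"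
  note K1 = kmD1[OF km] kmD2[OF km] kmD3[OF km] kmD4[OF km] kmD5[OF km] kmD6[OF km] kmD7[OF km]
    kmD8[OF km] kmD9[OF km] kmD10[OF km] kmD11[OF km]
  have ag: "abelian_group (HG R p0 p1)"
    apply (rule abelian_groupI)
         apply (simp add: K1(2))
        apply (simp add: K1(1))
       apply (simp add: K1(4))
      apply (simp, rule K1(5), assumption+)
     apply (simp add: K1(6))
    apply simp
    apply (metis K1(5,7))
    done
  show ?thesis
    apply (rule kmod.intro[OF ag])
    apply (rule kmod_axioms.intro)
        apply (simp add: K1(3))
       apply (simp add: K1(8))
      apply (simp add: K1(9))
     apply (simp add: K1(10))
    apply (simp add: K1(11))
    done
qed

lemma hom_add[simp]: "p0 \<in> Ob R \<Longrightarrow> p1 \<in> Ob R \<Longrightarrow> x \<in> Hom R p0 p1 \<Longrightarrow> y \<in> Hom R p0 p1 \<Longrightarrow> sac.add R p0 p1 x y \<in> Hom R p0 p1"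
  by (rule kmD2[OF kmHom])

lemma hom_zer[simp]: "p0 \<in> Ob R \<Longrightarrow> p1 \<in> Ob R \<Longrightarrow> zer R p0 p1 \<in> Hom R p0 p1"
  by (rule kmD1[OF kmHom])

lemma hom_sm[simp]: "p0 \<in> Ob R \<Longrightarrow> p1 \<in> Ob R \<Longrightarrow> x \<in> Hom R p0 p1 \<Longrightarrow> smult R p0 p1 a x \<in> Hom R p0 p1"
  by (rule kmD3[OF kmHom])

lemma hsub_eq: "p0 \<in> Ob R \<Longrightarrow> p1 \<in> Ob R \<Longrightarrow> y \<in> Hom R p0 p1 \<Longrightarrow>
    hsub R p0 p1 x y = x \<ominus>\<^bsub>HG R p0 p1\<^esub> y"
  using kmod.sm_neg1[OF kmodHG] by (simp add: hsub_def a_minus_def)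

lemma hom_hsub[simp]: "p0 \<in> Ob R \<Longrightarrow> p1 \<in> Ob R \<Longrightarrow> x \<in> Hom R p0 p1 \<Longrightarrow> y \<in> Hom R p0 p1 \<Longrightarrow> hsub R p0 p1 x y \<in> Hom R p0 p1"
  by (simp add: hsub_def)

lemma mul_closed[simp]: "p0 \<in> Ob R \<Longrightarrow> p1 \<in> Ob R \<Longrightarrow> p2 \<in> Ob R \<Longrightarrow> u \<in> Hom R p0 p1 \<Longrightarrow> v \<in> Hom R p1 p2 \<Longrightarrow>
   mul R p0 p1 p2 u v \<in> Hom R p0 p2"
  using KS(2) by simp

lemma mul_assoc: "p0 \<in> Ob R \<Longrightarrow> p1 \<in> Ob R \<Longrightarrow> p2 \<in> Ob R \<Longrightarrow> p3 \<in> Ob R \<Longrightarrow>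
  u \<in> Hom R p0 p1 \<Longrightarrow> v \<in> Hom R p1 p2 \<Longrightarrow> w \<in> Hom R p2 p3 \<Longrightarrow>
  mul R p0 p2 p3 (mul R p0 p1 p2 u v) w = mul R p0 p1 p3 u (mul R p1 p2 p3 v w)"
  using KS(3) by simp

lemma idm_closed[simp]: "p \<in> Ob R \<Longrightarrow> idm R p \<in> Hom R p p"
  using KS(4) by simp

lemma mul_idm: "p0 \<in> Ob R \<Longrightarrow> p1 \<in> Ob R \<Longrightarrow> u \<in> Hom R p0 p1 \<Longrightarrow>
  mul R p0 p0 p1 (idm R p0) u = u \<and> mul R p0 p1 p1 u (idm R p1) = u"
  using KS(5) by simp

lemma mul_lin:
  assumes "p0 \<in> Ob R" "p1 \<in> Ob R" "p2 \<in> Ob R" "u \<in> Hom R p0 p1" "u' \<in> Hom R p0 p1"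
     "v \<in> Hom R p1 p2" "v' \<in> Hom R p1 p2"
  shows "mul R p0 p1 p2 (sac.add R p0 p1 u u') v = sac.add R p0 p2 (mul R p0 p1 p2 u v) (mul R p0 p1 p2 u' v)"
    "mul R p0 p1 p2 u (sac.add R p1 p2 v v') = sac.add R p0 p2 (mul R p0 p1 p2 u v) (mul R p0 p1 p2 u v')"
    "mul R p0 p1 p2 (smult R p0 p1 a u) v = smult R p0 p2 a (mul R p0 p1 p2 u v)"
    "mul R p0 p1 p2 u (smult R p1 p2 a v) = smult R p0 p2 a (mul R p0 p1 p2 u v)"
  using KS(6) assms by simp_all

lemma mul_zer:
  assumes "p0 \<in> Ob R" "p1 \<in> Ob R" "p2 \<in> Ob R" "u \<in> Hom R p0 p1" "v \<in> Hom R p1 p2"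
  shows "mul R p0 p1 p2 (zer R p0 p1) v = zer R p0 p2" "mul R p0 p1 p2 u (zer R p1 p2) = zer R p0 p2"
proof -
  interpret M1: kmod "HG R p0 p1" "smult R p0 p1" using kmodHG[OF assms(1,2)] .
  interpret M2: kmod "HG R p1 p2" "smult R p1 p2" using kmodHG[OF assms(2,3)] .
  interpret M3: kmod "HG R p0 p2" "smult R p0 p2" using kmodHG[OF assms(1,3)] .
  have "mul R p0 p1 p2 (zer R p0 p1) v = mul R p0 p1 p2 (smult R p0 p1 0 (zer R p0 p1)) v"
    using M1.sm_zero_l[of "zer R p0 p1"] assms by simp
  also have "\<dots> = zer R p0 p2" using assms mul_lin(3)[of p0 p1 p2 "zer R p0 p1" _ v v 0] M3.sm_zero_l
    by simp
  finally show "mul R p0 p1 p2 (zer R p0 p1) v = zer R p0 p2" .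
  have "mul R p0 p1 p2 u (zer R p1 p2) = mul R p0 p1 p2 u (smult R p1 p2 0 (zer R p1 p2))"
    using M2.sm_zero_l[of "zer R p1 p2"] assms by simp
  also have "\<dots> = zer R p0 p2" using assms mul_lin(4)[of p0 p1 p2 u u "zer R p1 p2" _ 0] M3.sm_zero_l
    by simp
  finally show "mul R p0 p1 p2 u (zer R p1 p2) = zer R p0 p2" .
qed

lemma mul_hsub:
  assumes "p0 \<in> Ob R" "p1 \<in> Ob R" "p2 \<in> Ob R" "u \<in> Hom R p0 p1" "u' \<in> Hom R p0 p1"
     "v \<in> Hom R p1 p2" "v' \<in> Hom R p1 p2"
  shows "mul R p0 p1 p2 (hsub R p0 p1 u u') v = hsub R p0 p2 (mul R p0 p1 p2 u v) (mul R p0 p1 p2 u' v)"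
    "mul R p0 p1 p2 u (hsub R p1 p2 v v') = hsub R p0 p2 (mul R p0 p1 p2 u v) (mul R p0 p1 p2 u v')"
  using assms by (simp_all add: hsub_def mul_lin)

lemma Fil0: "p0 \<in> Ob R \<Longrightarrow> p1 \<in> Ob R \<Longrightarrow> Fil R 0 p0 p1 = Hom R p0 p1"
  using FS(1) by simp

lemma Fil_submod: "p0 \<in> Ob R \<Longrightarrow> p1 \<in> Ob R \<Longrightarrow> kmod.submod (HG R p0 p1) (smult R p0 p1) (Fil R n p0 p1)"
proof -
  assume o: "p0 \<in> Ob R" "p1 \<in> Ob R"
  have "submodule_on (Hom R p0 p1) (sac.add R p0 p1) (zer R p0 p1) (smult R p0 p1) (Fil R n p0 p1)"
    using FS(1) o by simp
  then show ?thesis using kmodHG[OF o] unfolding submodule_on_def kmod.submod_def[OF kmodHG[OF o]]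
    by simp
qed

lemma Fil_Suc: "p0 \<in> Ob R \<Longrightarrow> p1 \<in> Ob R \<Longrightarrow> Fil R (Suc n) p0 p1 \<subseteq> Fil R n p0 p1"
  using FS(1) by simp

lemma Fil_mono: assumes "p0 \<in> Ob R" "p1 \<in> Ob R" "n \<le> m" shows "Fil R m p0 p1 \<subseteq> Fil R n p0 p1"
  using assms(3)
proof (induction m rule: dec_induct)
  case base then show ?case by simp
next
  case (step m) then show ?case using Fil_Suc[OF assms(1,2), of m] by (meson order_trans)
qed

lemma Fil_hom: "p0 \<in> Ob R \<Longrightarrow> p1 \<in> Ob R \<Longrightarrow> x \<in> Fil R n p0 p1 \<Longrightarrow> x \<in> Hom R p0 p1"
  using Fil_mono[of p0 p1 0 n] Fil0 by auto

lemma Fil_mul: "p0 \<in> Ob R \<Longrightarrow> p1 \<in> Ob R \<Longrightarrow> p2 \<in> Ob R \<Longrightarrow> u \<in> Fil R n1 p0 p1 \<Longrightarrow> v \<in> Fil R n2 p1 p2 \<Longrightarrow>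
    mul R p0 p1 p2 u v \<in> Fil R (n1 + n2) p0 p2"
  using FS(2) by simp

lemma Fil_zer[simp]: assumes o: "p0 \<in> Ob R" "p1 \<in> Ob R" shows "zer R p0 p1 \<in> Fil R n p0 p1"
  using kmod.submodD(2)[OF kmodHG[OF o] Fil_submod[OF o]] by simp

lemma Fil_add[simp]: assumes o: "p0 \<in> Ob R" "p1 \<in> Ob R" shows "x \<in> Fil R n p0 p1 \<Longrightarrow> y \<in> Fil R n p0 p1 \<Longrightarrow> sac.add R p0 p1 x y \<in> Fil R n p0 p1"
  using kmod.submodD(3)[OF kmodHG[OF o] Fil_submod[OF o]] by simp

lemma Fil_sm[simp]: assumes o: "p0 \<in> Ob R" "p1 \<in> Ob R" shows "x \<in> Fil R n p0 p1 \<Longrightarrow> smult R p0 p1 a x \<in> Fil R n p0 p1"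
  using kmod.submodD(4)[OF kmodHG[OF o] Fil_submod[OF o]] by simp

lemma Fil_hsub[simp]: "p0 \<in> Ob R \<Longrightarrow> p1 \<in> Ob R \<Longrightarrow> x \<in> Fil R n p0 p1 \<Longrightarrow> y \<in> Fil R n p0 p1 \<Longrightarrow> hsub R p0 p1 x y \<in> Fil R n p0 p1"
  by (simp add: hsub_def)

lemma cg_refl: assumes o: "p0 \<in> Ob R" "p1 \<in> Ob R" and x: "x \<in> Hom R p0 p1" shows "hsub R p0 p1 x x \<in> Fil R n p0 p1"
  unfolding hsub_eq[OF o x] by (rule kmod.cg_refl[OF kmodHG[OF o] Fil_submod[OF o]]) (use x in simp)

lemma cg_sym: assumes o: "p0 \<in> Ob R" "p1 \<in> Ob R" and h: "x \<in> Hom R p0 p1" "y \<in> Hom R p0 p1"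
  "hsub R p0 p1 x y \<in> Fil R n p0 p1" shows "hsub R p0 p1 y x \<in> Fil R n p0 p1"
  unfolding hsub_eq[OF o h(1)] by (rule kmod.cg_sym[OF kmodHG[OF o] Fil_submod[OF o]]) (use h hsub_eq[OF o h(2)] in simp_all)

lemma cg_trans: assumes o: "p0 \<in> Ob R" "p1 \<in> Ob R" and h: "x \<in> Hom R p0 p1" "y \<in> Hom R p0 p1" "z \<in> Hom R p0 p1"
  "hsub R p0 p1 x y \<in> Fil R n p0 p1" "hsub R p0 p1 y z \<in> Fil R n p0 p1" shows "hsub R p0 p1 x z \<in> Fil R n p0 p1"
  unfolding hsub_eq[OF o h(3)] by (rule kmod.cg_trans[OF kmodHG[OF o] Fil_submod[OF o], of x y])
    (use h hsub_eq[OF o h(2)] hsub_eq[OF o h(3)] in simp_all)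

lemma cg_add: assumes o: "p0 \<in> Ob R" "p1 \<in> Ob R" and h: "x \<in> Hom R p0 p1" "y \<in> Hom R p0 p1" "x' \<in> Hom R p0 p1" "y' \<in> Hom R p0 p1"
  "hsub R p0 p1 x x' \<in> Fil R n p0 p1" "hsub R p0 p1 y y' \<in> Fil R n p0 p1" shows
  "hsub R p0 p1 (sac.add R p0 p1 x y) (sac.add R p0 p1 x' y') \<in> Fil R n p0 p1"
proof -
  have yy: "sac.add R p0 p1 x' y' \<in> Hom R p0 p1" using o h by simp
  show ?thesis
  unfolding hsub_eq[OF o yy] using kmod.cg_add[OF kmodHG[OF o] Fil_submod[OF o], of x y x' y'] h
    hsub_eq[OF o h(3)] hsub_eq[OF o h(4)] by simp
qed

lemma cg_sm: assumes o: "p0 \<in> Ob R" "p1 \<in> Ob R" and h: "x \<in> Hom R p0 p1" "y \<in> Hom R p0 p1"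
  "hsub R p0 p1 x y \<in> Fil R n p0 p1" shows "hsub R p0 p1 (smult R p0 p1 a x) (smult R p0 p1 a y) \<in> Fil R n p0 p1"
proof -
  have yy: "smult R p0 p1 a y \<in> Hom R p0 p1" using o h by simp
  show ?thesis
  unfolding hsub_eq[OF o yy] using kmod.cg_sm[OF kmodHG[OF o] Fil_submod[OF o], of x y] h
    hsub_eq[OF o h(2)] by simp
qed

lemma cg_mono: "p0 \<in> Ob R \<Longrightarrow> p1 \<in> Ob R \<Longrightarrow> n \<le> m \<Longrightarrow> hsub R p0 p1 x y \<in> Fil R m p0 p1 \<Longrightarrow> hsub R p0 p1 x y \<in> Fil R n p0 p1"
  using Fil_mono[of p0 p1 n m] by auto

lemma cg_mul:
  assumes o: "p0 \<in> Ob R" "p1 \<in> Ob R" "p2 \<in> Ob R" and h: "u \<in> Hom R p0 p1" "u' \<in> Hom R p0 p1"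
     "v \<in> Hom R p1 p2" "v' \<in> Hom R p1 p2"
     and c: "hsub R p0 p1 u u' \<in> Fil R n p0 p1" "hsub R p1 p2 v v' \<in> Fil R n p1 p2"
  shows "hsub R p0 p2 (mul R p0 p1 p2 u v) (mul R p0 p1 p2 u' v') \<in> Fil R n p0 p2"
proof (rule cg_trans[where y = "mul R p0 p1 p2 u' v"])
  have "hsub R p0 p2 (mul R p0 p1 p2 u v) (mul R p0 p1 p2 u' v) = mul R p0 p1 p2 (hsub R p0 p1 u u') v"
    using mul_hsub o h by simp
  moreover have "\<dots> \<in> Fil R (n + 0) p0 p2" using Fil_mul[OF o c(1), of v 0] Fil0[OF o(2,3)] h by simp
  ultimately show "hsub R p0 p2 (mul R p0 p1 p2 u v) (mul R p0 p1 p2 u' v) \<in> Fil R n p0 p2" by simp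
  have "hsub R p0 p2 (mul R p0 p1 p2 u' v) (mul R p0 p1 p2 u' v') = mul R p0 p1 p2 u' (hsub R p1 p2 v v')"
    using mul_hsub o h by simp
  moreover have "\<dots> \<in> Fil R (0 + n) p0 p2" using Fil_mul[OF o _ c(2), of u' 0] Fil0[OF o(1,2)] h by simp
  ultimately show "hsub R p0 p2 (mul R p0 p1 p2 u' v) (mul R p0 p1 p2 u' v') \<in> Fil R n p0 p2" by simp
qed (use o h in auto)

lemma cg_add_small: assumes o: "p0 \<in> Ob R" "p1 \<in> Ob R" and h: "x \<in> Hom R p0 p1" "y \<in> Hom R p0 p1" "t \<in> Hom R p0 p1"
  "hsub R p0 p1 x y \<in> Fil R n p0 p1" "t \<in> Fil R n p0 p1" shows
  "hsub R p0 p1 (sac.add R p0 p1 x t) y \<in> Fil R n p0 p1"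
  unfolding hsub_eq[OF o h(2)] using kmod.cg_add_small[OF kmodHG[OF o] Fil_submod[OF o], of x y t] h
    hsub_eq[OF o h(2)] by simp

lemma hsub_zero_eq: "p0 \<in> Ob R \<Longrightarrow> p1 \<in> Ob R \<Longrightarrow> x \<in> Hom R p0 p1 \<Longrightarrow> y \<in> Hom R p0 p1 \<Longrightarrow>
  hsub R p0 p1 x y = zer R p0 p1 \<Longrightarrow> x = y"
  using kmod.minus_zero_eq[OF kmodHG] hsub_eq by simp

end

context sacl
begin

lemma iso_cases: "p0 \<in> Ob R \<Longrightarrow> p1 \<in> Ob R \<Longrightarrow> Hom R p0 p1 = {zer R p0 p1} \<or>
  (\<exists>u v. u \<in> Hom R p0 p1 \<and> v \<in> Hom R p1 p0 \<and> mul R p0 p1 p0 u v = idm R p0 \<and> mul R p1 p0 p1 v u = idm R p1)"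
proof -
  assume o: "p0 \<in> Ob R" "p1 \<in> Ob R"
  have "Hom R p0 p1 \<noteq> {zer R p0 p1} \<longrightarrow> (\<exists>u\<in>Hom R p0 p1. \<exists>v\<in>Hom R p1 p0.
           mul R p0 p1 p0 u v = idm R p0 \<and> mul R p1 p0 p1 v u = idm R p1)" using KS(7) o by simp
  then show ?thesis by blast
qed

lemma iso_fact:
  assumes o: "p0 \<in> Ob R" "p1 \<in> Ob R" and uv: "u \<in> Hom R p0 p1" "v \<in> Hom R p1 p0" "mul R p0 p1 p0 u v = idm R p0"
    and x: "x \<in> Hom R p0 p1"
  shows "x = mul R p0 p1 p1 u (mul R p1 p0 p1 v x)"
proof -
  have "x = mul R p0 p0 p1 (idm R p0) x" using mul_idm[OF o x] by simp
  also have "\<dots> = mul R p0 p0 p1 (mul R p0 p1 p0 u v) x" using uv by simp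
  also have "\<dots> = mul R p0 p1 p1 u (mul R p1 p0 p1 v x)" using mul_assoc[OF o(1) o(2) o(1) o(2) uv(1,2) x] .
  finally show ?thesis .
qed

lemma C3D: "q \<in> Ob R \<Longrightarrow> x \<in> Hom R q q \<Longrightarrow> (\<forall>n. x \<in> Fil R n q q) \<Longrightarrow> x = zer R q q"
  "q \<in> Ob R \<Longrightarrow> (\<forall>n. a n \<in> Hom R q q) \<Longrightarrow> (\<forall>n m. n \<le> m \<longrightarrow> hsub R q q (a m) (a n) \<in> Fil R n q q) \<Longrightarrow>
       (\<exists>x\<in>Hom R q q. \<forall>n. hsub R q q x (a n) \<in> Fil R n q q)"
  using C3[unfolded cond_C3_def] apply -
   apply (drule bspec, assumption, erule conjE, erule ballE, (erule mp)?, assumption+) apply simp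
  apply (drule bspec, assumption, erule conjE)
  apply (drule spec[of _ a], erule mp, simp)
  done

lemma sep: assumes o: "p0 \<in> Ob R" "p1 \<in> Ob R" and x: "x \<in> Hom R p0 p1" and h: "\<And>n. x \<in> Fil R n p0 p1"
  shows "x = zer R p0 p1"
  using iso_cases[OF o]
proof
  assume "Hom R p0 p1 = {zer R p0 p1}" then show ?thesis using x by blast
next
  assume "\<exists>u v. u \<in> Hom R p0 p1 \<and> v \<in> Hom R p1 p0 \<and> mul R p0 p1 p0 u v = idm R p0 \<and> mul R p1 p0 p1 v u = idm R p1"
  then obtain u v where uv: "u \<in> Hom R p0 p1" "v \<in> Hom R p1 p0" "mul R p0 p1 p0 u v = idm R p0" by blast
  have "\<forall>n. mul R p1 p0 p1 v x \<in> Fil R n p1 p1"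
  proof
    fix n show "mul R p1 p0 p1 v x \<in> Fil R n p1 p1"
      using Fil_mul[OF o(2) o(1) o(2), of v 0 x n] Fil0[OF o(2) o(1)] uv h by simp
  qed
  then have "mul R p1 p0 p1 v x = zer R p1 p1" using C3D(1)[OF o(2)] o uv x by simp
  then show ?thesis using iso_fact[OF o uv x] mul_zer[OF o(1) o(2) o(2) uv(1) idm_closed[OF o(2)]] by simp
qed

lemma eq_by_cg: assumes o: "p0 \<in> Ob R" "p1 \<in> Ob R" and x: "x \<in> Hom R p0 p1" "y \<in> Hom R p0 p1"
  and h: "\<And>n. hsub R p0 p1 x y \<in> Fil R n p0 p1" shows "x = y"
  using sep[OF o _ h] hsub_zero_eq[OF o x] o x by simp

lemma complete_qq:
  fixes s :: "nat \<Rightarrow> 'm"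
  assumes q: "q \<in> Ob R" and s: "\<And>N. s N \<in> Hom R q q"
    and c: "\<And>n. \<exists>T. \<forall>N\<ge>T. hsub R q q (s N) (s T) \<in> Fil R n q q"
  shows "\<exists>x\<in>Hom R q q. \<forall>n. \<exists>T. \<forall>N\<ge>T. hsub R q q (s N) x \<in> Fil R n q q"
proof -
  define T where "T n = (SOME T. \<forall>N\<ge>T. hsub R q q (s N) (s T) \<in> Fil R n q q)" for n
  have T: "\<forall>N\<ge>T n. hsub R q q (s N) (s (T n)) \<in> Fil R n q q" for n
    unfolding T_def using someI_ex[OF c] .
  define M where "M n = (\<Sum>i\<le>n. T i)" for n
  have MT: "T n \<le> M n" for n unfolding M_def by (rule member_le_sum) auto
  have Mmono: "n \<le> m \<Longrightarrow> M n \<le> M m" for n m unfolding M_def by (rule sum_mono2) auto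
  define a where "a n = s (M n)" for n
  have ah: "a n \<in> Hom R q q" for n using s a_def by simp
  have "\<forall>n m. n \<le> m \<longrightarrow> hsub R q q (a m) (a n) \<in> Fil R n q q"
  proof (intro allI impI)
    fix n m :: nat assume nm: "n \<le> m"
    have 1: "hsub R q q (s (M m)) (s (T n)) \<in> Fil R n q q" using T MT Mmono[OF nm] by (meson order_trans)
    have 2: "hsub R q q (s (M n)) (s (T n)) \<in> Fil R n q q" using T MT by blast
    show "hsub R q q (a m) (a n) \<in> Fil R n q q" unfolding a_def
      by (rule cg_trans[OF q q s s s 1 cg_sym[OF q q s s 2]])
  qed
  then obtain x where x: "x \<in> Hom R q q" "\<And>n. hsub R q q x (a n) \<in> Fil R n q q"
    using C3D(2)[OF q, of a] ah by blast
  have "\<forall>n. \<exists>T. \<forall>N\<ge>T. hsub R q q (s N) x \<in> Fil R n q q"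
  proof
    fix n show "\<exists>T. \<forall>N\<ge>T. hsub R q q (s N) x \<in> Fil R n q q"
    proof (intro exI allI impI)
      fix N assume N: "M n \<le> N"
      have 1: "hsub R q q (s N) (s (T n)) \<in> Fil R n q q" using T MT N by (meson order_trans)
      have 2: "hsub R q q (s (M n)) (s (T n)) \<in> Fil R n q q" using T MT by blast
      have 3: "hsub R q q (s (M n)) x \<in> Fil R n q q" using cg_sym[OF q q x(1) ah x(2)[of n]] a_def by simp
      show "hsub R q q (s N) x \<in> Fil R n q q"
        by (rule cg_trans[OF q q s s x(1) cg_trans[OF q q s s s 1 cg_sym[OF q q s s 2]] 3])
    qed
  qed
  then show ?thesis using x by blast
qed

lemma complete:
  fixes s :: "nat \<Rightarrow> 'm"
  assumes o: "p0 \<in> Ob R" "p1 \<in> Ob R" and s: "\<And>N. s N \<in> Hom R p0 p1"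
    and c: "\<And>n. \<exists>T. \<forall>N\<ge>T. hsub R p0 p1 (s N) (s T) \<in> Fil R n p0 p1"
  shows "\<exists>x\<in>Hom R p0 p1. \<forall>n. \<exists>T. \<forall>N\<ge>T. hsub R p0 p1 (s N) x \<in> Fil R n p0 p1"
  using iso_cases[OF o]
proof
  assume H: "Hom R p0 p1 = {zer R p0 p1}"
  have "s N = zer R p0 p1" for N using s H by blast
  then show ?thesis using H cg_refl[OF o] by auto
next
  assume "\<exists>u v. u \<in> Hom R p0 p1 \<and> v \<in> Hom R p1 p0 \<and> mul R p0 p1 p0 u v = idm R p0 \<and> mul R p1 p0 p1 v u = idm R p1"
  then obtain u v where uv: "u \<in> Hom R p0 p1" "v \<in> Hom R p1 p0" "mul R p0 p1 p0 u v = idm R p0" by blast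
  define b where "b N = mul R p1 p0 p1 v (s N)" for N
  have bh: "b N \<in> Hom R p1 p1" for N unfolding b_def using o uv s by simp
  have cb: "\<exists>T. \<forall>N\<ge>T. hsub R p1 p1 (b N) (b T) \<in> Fil R n p1 p1" for n
  proof -
    obtain T where T: "\<forall>N\<ge>T. hsub R p0 p1 (s N) (s T) \<in> Fil R n p0 p1" using c by blast
    have "hsub R p1 p1 (b N) (b T) \<in> Fil R n p1 p1" if "N \<ge> T" for N
    proof -
      have "hsub R p1 p1 (b N) (b T) = mul R p1 p0 p1 v (hsub R p0 p1 (s N) (s T))"
        unfolding b_def using mul_hsub(2)[OF o(2) o(1) o(2) uv(2) uv(2) s s] by simp
      also have "\<dots> \<in> Fil R (0 + n) p1 p1" using Fil_mul[OF o(2) o(1) o(2), of v 0] Fil0[OF o(2) o(1)] uv T that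
        by simp
      finally show ?thesis by simp
    qed
    then show ?thesis by blast
  qed
  then obtain y where y: "y \<in> Hom R p1 p1" "\<And>n. \<exists>T. \<forall>N\<ge>T. hsub R p1 p1 (b N) y \<in> Fil R n p1 p1"
    using complete_qq[of p1 b, OF o(2) bh cb] by blast
  have xh: "mul R p0 p1 p1 u y \<in> Hom R p0 p1" using o uv y by simp
  have "\<exists>T. \<forall>N\<ge>T. hsub R p0 p1 (s N) (mul R p0 p1 p1 u y) \<in> Fil R n p0 p1" for n
  proof -
    obtain T where T: "\<forall>N\<ge>T. hsub R p1 p1 (b N) y \<in> Fil R n p1 p1" using y by blast
    have "hsub R p0 p1 (s N) (mul R p0 p1 p1 u y) \<in> Fil R n p0 p1" if "N \<ge> T" for N
    proof -
      have "hsub R p0 p1 (s N) (mul R p0 p1 p1 u y) = mul R p0 p1 p1 u (hsub R p1 p1 (b N) y)"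
        unfolding b_def using mul_hsub(2)[OF o(1) o(2) o(2) uv(1) uv(1) _ y(1), of "b N"] bh iso_fact[OF o uv s]
        b_def by simp
      also have "\<dots> \<in> Fil R (0 + n) p0 p1" using Fil_mul[OF o(1) o(2) o(2), of u 0] Fil0[OF o(1) o(2)] uv T that
        by simp
      finally show ?thesis by simp
    qed
    then show ?thesis by blast
  qed
  then show ?thesis using xh by blast
qed

end

context sacl
begin

lemma klinD:
  assumes "is_klinear_fam R D" "p0 \<in> Ob R" "p1 \<in> Ob R"
  shows "u \<in> Hom R p0 p1 \<Longrightarrow> D p0 p1 u \<in> Hom R p0 p1"
    "u \<in> Hom R p0 p1 \<Longrightarrow> v \<in> Hom R p0 p1 \<Longrightarrow> D p0 p1 (sac.add R p0 p1 u v) = sac.add R p0 p1 (D p0 p1 u) (D p0 p1 v)"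
    "u \<in> Hom R p0 p1 \<Longrightarrow> D p0 p1 (smult R p0 p1 a u) = smult R p0 p1 a (D p0 p1 u)"
  using assms unfolding is_klinear_fam_def by simp_all

lemma sm0_zer: "p0 \<in> Ob R \<Longrightarrow> p1 \<in> Ob R \<Longrightarrow> x \<in> Hom R p0 p1 \<Longrightarrow> smult R p0 p1 0 x = zer R p0 p1"
  using kmod.sm_zero_l[OF kmodHG] by simp

lemma sm_zer: "p0 \<in> Ob R \<Longrightarrow> p1 \<in> Ob R \<Longrightarrow> smult R p0 p1 a (zer R p0 p1) = zer R p0 p1"
  using kmod.sm_zero_r[OF kmodHG] by simp

lemma klin_zer: assumes "is_klinear_fam R D" "p0 \<in> Ob R" "p1 \<in> Ob R" shows "D p0 p1 (zer R p0 p1) = zer R p0 p1"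
proof -
  have "D p0 p1 (zer R p0 p1) = D p0 p1 (smult R p0 p1 0 (zer R p0 p1))" using sm0_zer assms by simp
  also have "\<dots> = smult R p0 p1 0 (D p0 p1 (zer R p0 p1))" using klinD(3)[OF assms, of "zer R p0 p1" 0] assms by simp
  also have "\<dots> = zer R p0 p1" using klinD(1)[OF assms, of "zer R p0 p1"] sm0_zer assms by simp
  finally show ?thesis .
qed

lemma klin_hsub: assumes "is_klinear_fam R D" "p0 \<in> Ob R" "p1 \<in> Ob R" "u \<in> Hom R p0 p1" "v \<in> Hom R p0 p1"
  shows "D p0 p1 (hsub R p0 p1 u v) = hsub R p0 p1 (D p0 p1 u) (D p0 p1 v)"
  using assms klinD[OF assms(1-3)] by (simp add: hsub_def)

lemma pow_hom: "is_klinear_fam R D \<Longrightarrow> p0 \<in> Ob R \<Longrightarrow> p1 \<in> Ob R \<Longrightarrow> u \<in> Hom R p0 p1 \<Longrightarrow> (D p0 p1 ^^ k) u \<in> Hom R p0 p1"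
  by (induction k) (simp_all add: klinD)

lemma pow_add: "is_klinear_fam R D \<Longrightarrow> p0 \<in> Ob R \<Longrightarrow> p1 \<in> Ob R \<Longrightarrow> u \<in> Hom R p0 p1 \<Longrightarrow> v \<in> Hom R p0 p1 \<Longrightarrow>
  (D p0 p1 ^^ k) (sac.add R p0 p1 u v) = sac.add R p0 p1 ((D p0 p1 ^^ k) u) ((D p0 p1 ^^ k) v)"
  by (induction k) (simp_all add: klinD pow_hom)

lemma pow_sm: "is_klinear_fam R D \<Longrightarrow> p0 \<in> Ob R \<Longrightarrow> p1 \<in> Ob R \<Longrightarrow> u \<in> Hom R p0 p1 \<Longrightarrow>
  (D p0 p1 ^^ k) (smult R p0 p1 a u) = smult R p0 p1 a ((D p0 p1 ^^ k) u)"
  by (induction k) (simp_all add: klinD pow_hom)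

lemma pow_zer: "is_klinear_fam R D \<Longrightarrow> p0 \<in> Ob R \<Longrightarrow> p1 \<in> Ob R \<Longrightarrow> (D p0 p1 ^^ k) (zer R p0 p1) = zer R p0 p1"
  by (induction k) (simp_all add: klin_zer)

lemma pow_hsub: "is_klinear_fam R D \<Longrightarrow> p0 \<in> Ob R \<Longrightarrow> p1 \<in> Ob R \<Longrightarrow> u \<in> Hom R p0 p1 \<Longrightarrow> v \<in> Hom R p0 p1 \<Longrightarrow>
  (D p0 p1 ^^ k) (hsub R p0 p1 u v) = hsub R p0 p1 ((D p0 p1 ^^ k) u) ((D p0 p1 ^^ k) v)"
  by (simp add: hsub_def pow_add pow_sm)

lemma pow_Fil: assumes "\<And>x. x \<in> Fil R l p0 p1 \<Longrightarrow> D p0 p1 x \<in> Fil R l p0 p1"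
  shows "x \<in> Fil R l p0 p1 \<Longrightarrow> (D p0 p1 ^^ k) x \<in> Fil R l p0 p1"
  by (induction k) (simp_all add: assms)

definition good :: "('o, 'm) famap \<Rightarrow> bool" where
  "good D \<longleftrightarrow> is_klinear_fam R D \<and>
     (\<forall>p0\<in>Ob R. \<forall>p1\<in>Ob R. \<forall>l. \<forall>x\<in>Fil R l p0 p1. D p0 p1 x \<in> Fil R l p0 p1) \<and>
     (\<forall>p0\<in>Ob R. \<forall>p1\<in>Ob R. \<forall>n. \<exists>T. \<forall>x\<in>Hom R p0 p1. (D p0 p1 ^^ T) x \<in> Fil R n p0 p1)"

lemma goodD:
  assumes "good D" "p0 \<in> Ob R" "p1 \<in> Ob R"
  shows "is_klinear_fam R D" "x \<in> Fil R l p0 p1 \<Longrightarrow> D p0 p1 x \<in> Fil R l p0 p1"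
    "\<exists>T. \<forall>x\<in>Hom R p0 p1. (D p0 p1 ^^ T) x \<in> Fil R n p0 p1"
  using assms unfolding good_def by simp_all

lemma good_powFil: "good D \<Longrightarrow> p0 \<in> Ob R \<Longrightarrow> p1 \<in> Ob R \<Longrightarrow> x \<in> Fil R l p0 p1 \<Longrightarrow> (D p0 p1 ^^ k) x \<in> Fil R l p0 p1"
  using pow_Fil[of l p0 p1 D] goodD by blast

lemma goodT: assumes "good D" "p0 \<in> Ob R" "p1 \<in> Ob R"
  shows "\<exists>T. \<forall>k\<ge>T. \<forall>x\<in>Hom R p0 p1. (D p0 p1 ^^ k) x \<in> Fil R n p0 p1"
proof -
  obtain T where T: "\<forall>x\<in>Hom R p0 p1. (D p0 p1 ^^ T) x \<in> Fil R n p0 p1" using goodD(3)[OF assms] by blast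
  have "(D p0 p1 ^^ k) x \<in> Fil R n p0 p1" if "k \<ge> T" "x \<in> Hom R p0 p1" for k x
  proof -
    have "(D p0 p1 ^^ k) x = (D p0 p1 ^^ (k - T)) ((D p0 p1 ^^ T) x)"
      using that by (metis funpow_add le_add_diff_inverse2 o_apply)
    then show ?thesis using good_powFil[OF assms] T that by simp
  qed
  then show ?thesis by blast
qed

lemma psum_hom: "is_klinear_fam R D \<Longrightarrow> p0 \<in> Ob R \<Longrightarrow> p1 \<in> Ob R \<Longrightarrow> u \<in> Hom R p0 p1 \<Longrightarrow>
   exp_psum R D p0 p1 u N \<in> Hom R p0 p1"
  by (induction N) (simp_all add: pow_hom)

lemma psum_cauchy:
  assumes kl: "is_klinear_fam R D" and o: "p0 \<in> Ob R" "p1 \<in> Ob R" and u: "u \<in> Hom R p0 p1"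
    and T: "\<And>k. k \<ge> T \<Longrightarrow> (D p0 p1 ^^ k) u \<in> Fil R n p0 p1"
  shows "N \<ge> T \<Longrightarrow> hsub R p0 p1 (exp_psum R D p0 p1 u N) (exp_psum R D p0 p1 u T) \<in> Fil R n p0 p1"
proof (induction N rule: dec_induct)
  case base then show ?case using cg_refl[OF o psum_hom[OF kl o u]] by simp
next
  case (step N)
  show ?case
    using cg_add_small[OF o psum_hom[OF kl o u] psum_hom[OF kl o u] hom_sm[OF o pow_hom[OF kl o u]] step(3)]
      T step(1) o by simp
qed

lemma Ex_conv:
  assumes g: "good D" and o: "p0 \<in> Ob R" "p1 \<in> Ob R" and u: "u \<in> Hom R p0 p1"
  shows "der_exp R D p0 p1 u \<in> Hom R p0 p1 \<and> fil_converges_to R p0 p1 (exp_psum R D p0 p1 u) (der_exp R D p0 p1 u)"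
proof -
  note kl = goodD(1)[OF g o]
  let ?s = "exp_psum R D p0 p1 u"
  have c: "\<exists>T. \<forall>N\<ge>T. hsub R p0 p1 (?s N) (?s T) \<in> Fil R n p0 p1" for n
  proof -
    obtain T where T: "\<forall>k\<ge>T. \<forall>x\<in>Hom R p0 p1. (D p0 p1 ^^ k) x \<in> Fil R n p0 p1" using goodT[OF g o] by blast
    show ?thesis using psum_cauchy[OF kl o u, of T n] T u by blast
  qed
  obtain x where x: "x \<in> Hom R p0 p1" "\<forall>n. \<exists>T. \<forall>N\<ge>T. hsub R p0 p1 (?s N) x \<in> Fil R n p0 p1"
    using complete[OF o, of ?s, OF psum_hom[OF kl o u] c] by blast
  have ex: "x \<in> Hom R p0 p1 \<and> fil_converges_to R p0 p1 ?s x" using x unfolding fil_converges_to_def by simp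
  have un: "y = x" if yc: "y \<in> Hom R p0 p1 \<and> fil_converges_to R p0 p1 ?s y" for y
  proof (rule eq_by_cg[OF o _ x(1)])
    show "y \<in> Hom R p0 p1" using yc by simp
    fix n
    obtain T1 where T1: "\<forall>N\<ge>T1. hsub R p0 p1 (?s N) x \<in> Fil R n p0 p1" using x by blast
    obtain T2 where T2: "\<forall>N\<ge>T2. hsub R p0 p1 (?s N) y \<in> Fil R n p0 p1" using yc unfolding fil_converges_to_def by blast
    have 1: "hsub R p0 p1 (?s (max T1 T2)) x \<in> Fil R n p0 p1" using T1 by simp
    have 2: "hsub R p0 p1 (?s (max T1 T2)) y \<in> Fil R n p0 p1" using T2 by simp
    show "hsub R p0 p1 y x \<in> Fil R n p0 p1"
      using cg_trans[OF o _ psum_hom[OF kl o u] x(1) cg_sym[OF o psum_hom[OF kl o u] _ 2] 1] yc by simp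
  qed
  have "der_exp R D p0 p1 u = x" unfolding der_exp_def
    by (rule the_equality[where P="\<lambda>x. x \<in> Hom R p0 p1 \<and> fil_converges_to R p0 p1 ?s x", OF ex un])
  then show ?thesis using ex by simp
qed

lemma Ex_hom: "good D \<Longrightarrow> p0 \<in> Ob R \<Longrightarrow> p1 \<in> Ob R \<Longrightarrow> u \<in> Hom R p0 p1 \<Longrightarrow> der_exp R D p0 p1 u \<in> Hom R p0 p1"
  using Ex_conv by blast

lemma Ex_approx:
  assumes g: "good D" and o: "p0 \<in> Ob R" "p1 \<in> Ob R"
  shows "\<exists>T. \<forall>N\<ge>T. \<forall>u\<in>Hom R p0 p1. hsub R p0 p1 (der_exp R D p0 p1 u) (exp_psum R D p0 p1 u N) \<in> Fil R n p0 p1"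
proof -
  note kl = goodD(1)[OF g o]
  obtain T where T: "\<forall>k\<ge>T. \<forall>x\<in>Hom R p0 p1. (D p0 p1 ^^ k) x \<in> Fil R n p0 p1" using goodT[OF g o] by blast
  have "hsub R p0 p1 (der_exp R D p0 p1 u) (exp_psum R D p0 p1 u N) \<in> Fil R n p0 p1"
    if N: "N \<ge> T" and u: "u \<in> Hom R p0 p1" for N u
  proof -
    let ?s = "exp_psum R D p0 p1 u"
    note E = Ex_conv[OF g o u]
    obtain T1 where T1: "\<forall>M\<ge>T1. hsub R p0 p1 (?s M) (der_exp R D p0 p1 u) \<in> Fil R n p0 p1"
      using E unfolding fil_converges_to_def by blast
    let ?M = "max T1 N"
    have 1: "hsub R p0 p1 (?s ?M) (der_exp R D p0 p1 u) \<in> Fil R n p0 p1" using T1 by simp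
    have 2: "hsub R p0 p1 (?s ?M) (?s T) \<in> Fil R n p0 p1" using psum_cauchy[OF kl o u, of T n ?M] T u N by simp
    have 3: "hsub R p0 p1 (?s N) (?s T) \<in> Fil R n p0 p1" using psum_cauchy[OF kl o u, of T n N] T u N by simp
    have sh: "?s M \<in> Hom R p0 p1" for M using psum_hom[OF kl o u] .
    have 4: "hsub R p0 p1 (?s ?M) (?s N) \<in> Fil R n p0 p1"
      by (rule cg_trans[OF o sh sh sh 2 cg_sym[OF o sh sh 3]])
    show ?thesis by (rule cg_trans[OF o E[THEN conjunct1] sh sh cg_sym[OF o sh E[THEN conjunct1] 1] 4])
  qed
  then show ?thesis by blast
qed

lemma Ex_eqI:
  assumes g: "good D" and o: "p0 \<in> Ob R" "p1 \<in> Ob R" and u: "u \<in> Hom R p0 p1" and x: "x \<in> Hom R p0 p1"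
    and h: "\<And>n. \<exists>T. \<forall>N\<ge>T. hsub R p0 p1 x (exp_psum R D p0 p1 u N) \<in> Fil R n p0 p1"
  shows "der_exp R D p0 p1 u = x"
proof (rule eq_by_cg[OF o Ex_hom[OF g o u] x])
  fix n
  note kl = goodD(1)[OF g o]
  obtain T1 where T1: "\<forall>N\<ge>T1. \<forall>u\<in>Hom R p0 p1. hsub R p0 p1 (der_exp R D p0 p1 u) (exp_psum R D p0 p1 u N) \<in> Fil R n p0 p1"
    using Ex_approx[OF g o] by blast
  obtain T2 where T2: "\<forall>N\<ge>T2. hsub R p0 p1 x (exp_psum R D p0 p1 u N) \<in> Fil R n p0 p1" using h by blast
  have 1: "hsub R p0 p1 (der_exp R D p0 p1 u) (exp_psum R D p0 p1 u (max T1 T2)) \<in> Fil R n p0 p1" using T1 u by simp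
  have 2: "hsub R p0 p1 x (exp_psum R D p0 p1 u (max T1 T2)) \<in> Fil R n p0 p1" using T2 by simp
  show "hsub R p0 p1 (der_exp R D p0 p1 u) x \<in> Fil R n p0 p1"
    by (rule cg_trans[OF o Ex_hom[OF g o u] psum_hom[OF kl o u] x 1 cg_sym[OF o x psum_hom[OF kl o u] 2]])
qed

end

context kmod
begin

lemma sm_of_nat_add: "x \<in> carrier G \<Longrightarrow> sm (of_nat (a + b)) x = sm (of_nat a) x \<oplus> sm (of_nat b) x"
  by (simp add: sm_add_l)

lemma binom:
  assumes Phi_add: "\<And>x y. x \<in> carrier G \<Longrightarrow> y \<in> carrier G \<Longrightarrow> Phi (x \<oplus> y) = Phi x \<oplus> Phi y"
    and Phi_sm: "\<And>x a. x \<in> carrier G \<Longrightarrow> Phi (sm a x) = sm a (Phi x)"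
    and Phi_c: "\<And>x. x \<in> carrier G \<Longrightarrow> Phi x \<in> carrier G"
    and tc: "\<And>a b. t a b \<in> carrier G"
    and tP: "\<And>a b. Phi (t a b) = t (Suc a) b \<oplus> t a (Suc b)"
  shows "(Phi ^^ n) (t 0 0) = finsum G (\<lambda>k. sm (of_nat (n choose k)) (t k (n - k))) {..n}"
proof (induction n)
  case 0 then show ?case using tc by simp
next
  case (Suc n)
  have Phi0: "Phi \<zero> = \<zero>"
  proof -
    have "Phi \<zero> = Phi (sm 0 \<zero>)" by simp
    also have "\<dots> = \<zero>" using Phi_sm[of \<zero> 0] Phi_c[of \<zero>] by simp
    finally show ?thesis .
  qed
  have ag: "abelian_group G" by (rule abelian_group_axioms)
  let ?f = "\<lambda>k. sm (of_nat (n choose k)) (t k (n - k))"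
  have "(Phi ^^ Suc n) (t 0 0) = Phi (finsum G ?f {..n})" using Suc by simp
  also have "\<dots> = finsum G (\<lambda>k. Phi (?f k)) {..n}"
    by (rule hom_finsum[OF ag ag Phi_add Phi_c Phi0]) (auto simp: tc)
  also have "\<dots> = finsum G (\<lambda>k. sm (of_nat (n choose k)) (t (Suc k) (n - k)) \<oplus> sm (of_nat (n choose k)) (t k (Suc n - k))) {..n}"
  proof (rule finsum_cong')
    fix k assume k: "k \<in> {..n}"
    then have "Suc (n - k) = Suc n - k" by auto
    then show "Phi (?f k) = sm (of_nat (n choose k)) (t (Suc k) (n - k)) \<oplus> sm (of_nat (n choose k)) (t k (Suc n - k))"
      using Phi_sm tP tc sm_add_r by simp
  qed (auto simp: tc)
  also have "\<dots> = finsum G (\<lambda>k. sm (of_nat (n choose k)) (t (Suc k) (n - k))) {..n} \<oplus>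
                 finsum G (\<lambda>k. sm (of_nat (n choose k)) (t k (Suc n - k))) {..n}"
    by (rule finsum_addf) (auto simp: tc)
  finally have L: "(Phi ^^ Suc n) (t 0 0) = finsum G (\<lambda>k. sm (of_nat (n choose k)) (t (Suc k) (n - k))) {..n} \<oplus>
                 finsum G (\<lambda>k. sm (of_nat (n choose k)) (t k (Suc n - k))) {..n}" .
  let ?g = "\<lambda>k. sm (of_nat (Suc n choose k)) (t k (Suc n - k))"
  have "finsum G ?g {..Suc n} = finsum G (\<lambda>k. ?g (Suc k)) {..n} \<oplus> ?g 0"
    by (rule finsum_Suc2) (auto simp: tc)
  also have "finsum G (\<lambda>k. ?g (Suc k)) {..n} = finsum G (\<lambda>k. sm (of_nat (n choose k)) (t (Suc k) (n - k)) \<oplus> sm (of_nat (n choose Suc k)) (t (Suc k) (n - k))) {..n}"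
    by (rule finsum_cong') (auto simp: tc sm_add_l)
  also have "\<dots> = finsum G (\<lambda>k. sm (of_nat (n choose k)) (t (Suc k) (n - k))) {..n} \<oplus> finsum G (\<lambda>k. sm (of_nat (n choose Suc k)) (t (Suc k) (n - k))) {..n}"
    by (rule finsum_addf) (auto simp: tc)
  finally have R1: "finsum G ?g {..Suc n} = (finsum G (\<lambda>k. sm (of_nat (n choose k)) (t (Suc k) (n - k))) {..n} \<oplus>
     finsum G (\<lambda>k. sm (of_nat (n choose Suc k)) (t (Suc k) (n - k))) {..n}) \<oplus> ?g 0" .
  let ?h = "\<lambda>k. sm (of_nat (n choose k)) (t k (Suc n - k))"
  have "finsum G ?h {..Suc n} = finsum G (\<lambda>k. ?h (Suc k)) {..n} \<oplus> ?h 0"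
    by (rule finsum_Suc2) (auto simp: tc)
  moreover have "finsum G ?h {..Suc n} = ?h (Suc n) \<oplus> finsum G ?h {..n}"
    by (rule finsum_Suc) (auto simp: tc)
  moreover have "?h (Suc n) = \<zero>" using tc[of "Suc n" 0] by (simp add: binomial_eq_0)
  moreover have "finsum G (\<lambda>k. ?h (Suc k)) {..n} = finsum G (\<lambda>k. sm (of_nat (n choose Suc k)) (t (Suc k) (n - k))) {..n}"
    by (rule finsum_cong') (auto simp: tc)
  moreover have "?h 0 = ?g 0" by simp
  ultimately have R2: "finsum G (\<lambda>k. sm (of_nat (n choose Suc k)) (t (Suc k) (n - k))) {..n} \<oplus> ?g 0
      = finsum G ?h {..n}" using tc by (simp add: finsum_closed Pi_def)
  have "finsum G ?g {..Suc n} = finsum G (\<lambda>k. sm (of_nat (n choose k)) (t (Suc k) (n - k))) {..n} \<oplus> finsum G ?h {..n}"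
    unfolding R1 R2[symmetric] by (simp add: a_assoc tc finsum_closed Pi_def)
  then show ?case using L by simp
qed

lemma finsum_tri:
  fixes t :: "nat \<Rightarrow> nat \<Rightarrow> 'a" and N :: nat
  assumes tc: "\<And>a b. t a b \<in> carrier G"
  shows "finsum G (\<lambda>n. finsum G (\<lambda>k. t k (n - k)) {..n}) {..<N} = finsum G (\<lambda>(a, b). t a b) {(a, b). a + b < N}"
proof -
  have e: "{(a, b). a + b < N} = (\<Union>n\<in>{..<N}. (\<lambda>k. (k, n - k)) ` {..n})"
  proof (intro Set.set_eqI HOL.iffI)
    fix p assume "p \<in> {(a, b). a + b < N}"
    then obtain a b where p: "p = (a, b)" "a + b < N" by blast
    then show "p \<in> (\<Union>n\<in>{..<N}. (\<lambda>k. (k, n - k)) ` {..n})"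
      by (auto intro!: bexI[of _ "a + b"] image_eqI[of _ _ a])
  qed auto
  have "finsum G (\<lambda>(a, b). t a b) (\<Union>n\<in>{..<N}. (\<lambda>k. (k, n - k)) ` {..n}) =
        finsum G (\<lambda>n. finsum G (\<lambda>(a, b). t a b) ((\<lambda>k. (k, n - k)) ` {..n})) {..<N}"
    by (rule add.finprod_UN_disjoint) (auto simp: pairwise_def disjnt_def tc)
  also have "\<dots> = finsum G (\<lambda>n. finsum G (\<lambda>k. t k (n - k)) {..n}) {..<N}"
  proof (rule finsum_cong')
    fix n
    show "finsum G (\<lambda>(a, b). t a b) ((\<lambda>k. (k, n - k)) ` {..n}) = finsum G (\<lambda>k. t k (n - k)) {..n}"
      by (subst finsum_reindex) (auto simp: inj_on_def tc)
  qed (auto simp: tc finsum_closed Pi_def)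
  finally show ?thesis using e by simp
qed

lemma finsum_sq:
  fixes t :: "nat \<Rightarrow> nat \<Rightarrow> 'a" and N :: nat
  assumes tc: "\<And>a b. t a b \<in> carrier G"
  shows "finsum G (\<lambda>a. finsum G (\<lambda>b. t a b) {..<N}) {..<N} = finsum G (\<lambda>(a, b). t a b) ({..<N} \<times> {..<N})"
proof -
  have e: "{..<N} \<times> {..<N} = (\<Union>a\<in>{..<N}. (\<lambda>b. (a, b)) ` {..<N})" by auto
  have "finsum G (\<lambda>(a, b). t a b) (\<Union>a\<in>{..<N}. (\<lambda>b. (a, b)) ` {..<N}) =
        finsum G (\<lambda>a. finsum G (\<lambda>(a, b). t a b) ((\<lambda>b. (a, b)) ` {..<N})) {..<N}"
    by (rule add.finprod_UN_disjoint) (auto simp: pairwise_def disjnt_def tc)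
  also have "\<dots> = finsum G (\<lambda>a. finsum G (\<lambda>b. t a b) {..<N}) {..<N}"
  proof (rule finsum_cong')
    fix a
    show "finsum G (\<lambda>(a, b). t a b) ((\<lambda>b. (a, b)) ` {..<N}) = finsum G (\<lambda>b. t a b) {..<N}"
      by (subst finsum_reindex) (auto simp: inj_on_def tc)
  qed (auto simp: tc finsum_closed Pi_def)
  finally show ?thesis using e by simp
qed

lemma tri_sq:
  fixes t :: "nat \<Rightarrow> nat \<Rightarrow> 'a" and N :: nat
  assumes tc: "\<And>a b. t a b \<in> carrier G" and S: "submod S"
    and tS: "\<And>a b. T \<le> a \<or> T \<le> b \<Longrightarrow> t a b \<in> S" and N: "2 * T \<le> N"
  shows "finsum G (\<lambda>a. finsum G (\<lambda>b. t a b) {..<N}) {..<N} \<ominus>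
         finsum G (\<lambda>n. finsum G (\<lambda>k. t k (n - k)) {..n}) {..<N} \<in> S"
proof -
  note E1 = finsum_tri[of t N, OF tc]
  note E2 = finsum_sq[of t N, OF tc]
  have "finsum G (\<lambda>(a, b). t a b) ({..<N} \<times> {..<N}) \<ominus> finsum G (\<lambda>(a, b). t a b) {(a, b). a + b < N} \<in> S"
  proof (rule finsum_split_sub[OF _ _ _ S])
    fix p assume p: "p \<in> {..<N} \<times> {..<N} - {(a, b). a + b < N}"
    then obtain a b where ab: "p = (a, b)" "\<not> a + b < N" by auto
    then have "T \<le> a \<or> T \<le> b" using N by linarith
    then show "(case p of (a, b) \<Rightarrow> t a b) \<in> S" using ab tS by simp
  qed (auto simp: tc)
  then show ?thesis by (simp only: E1 E2)
qed

end

context sacl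
begin

lemma inv_nat: "n > 0 \<Longrightarrow> of_nat n * (inv_nat n :: 'k) = 1"
  unfolding inv_nat_def using KQ someI_ex[of "\<lambda>r::'k. of_nat n * r = 1"] by blast

lemma inv_nat_fact: "of_nat (fact n) * (inv_nat (fact n) :: 'k) = 1"
  using inv_nat[of "fact n"] by simp

lemma inv_nat_1: "(inv_nat (Suc 0) :: 'k) = 1"
  using inv_nat[of 1] by simp

lemma inv_fact_binom:
  assumes "k \<le> n"
  shows "(inv_nat (fact n) :: 'k) * of_nat (n choose k) = inv_nat (fact k) * inv_nat (fact (n - k))"
proof -
  let ?a = "of_nat (fact k) :: 'k" and ?b = "of_nat (fact (n - k)) :: 'k" and ?c = "of_nat (n choose k) :: 'k"
  let ?ia = "inv_nat (fact k) :: 'k" and ?ib = "inv_nat (fact (n - k)) :: 'k" and ?in = "inv_nat (fact n) :: 'k"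
  have f: "(of_nat (fact n) :: 'k) = ?a * ?b * ?c"
    using binomial_fact_lemma[OF assms] by (metis of_nat_fact of_nat_mult)
  have "?ia * ?ib = ?ia * ?ib * (of_nat (fact n) * ?in)" using inv_nat_fact by simp
  also have "\<dots> = (?a * ?ia) * (?b * ?ib) * ?c * ?in" unfolding f by (simp add: ac_simps)
  also have "\<dots> = ?in * ?c" using inv_nat_fact[of k] inv_nat_fact[of "n - k"] by simp
  finally show ?thesis by simp
qed

lemma HGlaws:
  assumes o: "p0 \<in> Ob R" "p1 \<in> Ob R"
  shows "x \<in> Hom R p0 p1 \<Longrightarrow> y \<in> Hom R p0 p1 \<Longrightarrow> smult R p0 p1 a (sac.add R p0 p1 x y) = sac.add R p0 p1 (smult R p0 p1 a x) (smult R p0 p1 a y)"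
    "x \<in> Hom R p0 p1 \<Longrightarrow> smult R p0 p1 (a + b) x = sac.add R p0 p1 (smult R p0 p1 a x) (smult R p0 p1 b x)"
    "x \<in> Hom R p0 p1 \<Longrightarrow> smult R p0 p1 (a * b) x = smult R p0 p1 a (smult R p0 p1 b x)"
    "x \<in> Hom R p0 p1 \<Longrightarrow> smult R p0 p1 1 x = x"
    "x \<in> Hom R p0 p1 \<Longrightarrow> y \<in> Hom R p0 p1 \<Longrightarrow> sac.add R p0 p1 x y = sac.add R p0 p1 y x"
    "x \<in> Hom R p0 p1 \<Longrightarrow> y \<in> Hom R p0 p1 \<Longrightarrow> z \<in> Hom R p0 p1 \<Longrightarrow>
       sac.add R p0 p1 (sac.add R p0 p1 x y) z = sac.add R p0 p1 x (sac.add R p0 p1 y z)"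
    "x \<in> Hom R p0 p1 \<Longrightarrow> sac.add R p0 p1 (zer R p0 p1) x = x"
    "x \<in> Hom R p0 p1 \<Longrightarrow> sac.add R p0 p1 x (zer R p0 p1) = x"
proof -
  interpret M: kmod "HG R p0 p1" "smult R p0 p1" by (rule kmodHG[OF o])
  show "x \<in> Hom R p0 p1 \<Longrightarrow> y \<in> Hom R p0 p1 \<Longrightarrow> smult R p0 p1 a (sac.add R p0 p1 x y) = sac.add R p0 p1 (smult R p0 p1 a x) (smult R p0 p1 a y)"
    using M.sm_add_r by simp
  show "x \<in> Hom R p0 p1 \<Longrightarrow> smult R p0 p1 (a + b) x = sac.add R p0 p1 (smult R p0 p1 a x) (smult R p0 p1 b x)"
    using M.sm_add_l by simp
  show "x \<in> Hom R p0 p1 \<Longrightarrow> smult R p0 p1 (a * b) x = smult R p0 p1 a (smult R p0 p1 b x)"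
    using M.sm_mult by simp
  show "x \<in> Hom R p0 p1 \<Longrightarrow> smult R p0 p1 1 x = x" by simp
  show "x \<in> Hom R p0 p1 \<Longrightarrow> y \<in> Hom R p0 p1 \<Longrightarrow> sac.add R p0 p1 x y = sac.add R p0 p1 y x"
    using M.a_comm by simp
  show "x \<in> Hom R p0 p1 \<Longrightarrow> y \<in> Hom R p0 p1 \<Longrightarrow> z \<in> Hom R p0 p1 \<Longrightarrow>
       sac.add R p0 p1 (sac.add R p0 p1 x y) z = sac.add R p0 p1 x (sac.add R p0 p1 y z)"
    using M.a_assoc by simp
  show "x \<in> Hom R p0 p1 \<Longrightarrow> sac.add R p0 p1 (zer R p0 p1) x = x" using M.l_zero by simp
  show "x \<in> Hom R p0 p1 \<Longrightarrow> sac.add R p0 p1 x (zer R p0 p1) = x" using M.r_zero by simp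
qed

lemma psum_finsum:
  assumes kl: "is_klinear_fam R D" and o: "p0 \<in> Ob R" "p1 \<in> Ob R" and u: "u \<in> Hom R p0 p1"
  shows "exp_psum R D p0 p1 u N = finsum (HG R p0 p1) (\<lambda>k. smult R p0 p1 (inv_nat (fact k)) ((D p0 p1 ^^ k) u)) {..<N}"
proof (induction N)
  interpret M: kmod "HG R p0 p1" "smult R p0 p1" by (rule kmodHG[OF o])
  case 0 then show ?case by simp
next
  interpret M: kmod "HG R p0 p1" "smult R p0 p1" by (rule kmodHG[OF o])
  case (Suc N)
  have "finsum (HG R p0 p1) (\<lambda>k. smult R p0 p1 (inv_nat (fact k)) ((D p0 p1 ^^ k) u)) {..<Suc N}
     = sac.add R p0 p1 (smult R p0 p1 (inv_nat (fact N)) ((D p0 p1 ^^ N) u))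
        (finsum (HG R p0 p1) (\<lambda>k. smult R p0 p1 (inv_nat (fact k)) ((D p0 p1 ^^ k) u)) {..<N})"
    unfolding lessThan_Suc by (subst M.finsum_insert) (auto simp: pow_hom[OF kl o u] o)
  moreover have "finsum (HG R p0 p1) (\<lambda>k. smult R p0 p1 (inv_nat (fact k)) ((D p0 p1 ^^ k) u)) {..<N} \<in> Hom R p0 p1"
    using M.finsum_closed[of "\<lambda>k. smult R p0 p1 (inv_nat (fact k)) ((D p0 p1 ^^ k) u)" "{..<N}"]
      pow_hom[OF kl o u] o by (simp add: Pi_def)
  moreover have "smult R p0 p1 (inv_nat (fact N)) ((D p0 p1 ^^ N) u) \<in> Hom R p0 p1"
    using pow_hom[OF kl o u] o by simp
  ultimately show ?case using Suc M.a_comm by simp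
qed

lemma psum_add:
  assumes kl: "is_klinear_fam R D" and o: "p0 \<in> Ob R" "p1 \<in> Ob R" and u: "u \<in> Hom R p0 p1" and v: "v \<in> Hom R p0 p1"
  shows "exp_psum R D p0 p1 (sac.add R p0 p1 u v) N = sac.add R p0 p1 (exp_psum R D p0 p1 u N) (exp_psum R D p0 p1 v N)"
proof -
  interpret M: kmod "HG R p0 p1" "smult R p0 p1" by (rule kmodHG[OF o])
  have uv: "sac.add R p0 p1 u v \<in> Hom R p0 p1" using o u v by simp
  have "finsum (HG R p0 p1) (\<lambda>k. smult R p0 p1 (inv_nat (fact k)) ((D p0 p1 ^^ k) (sac.add R p0 p1 u v))) {..<N}
     = finsum (HG R p0 p1) (\<lambda>k. sac.add R p0 p1 (smult R p0 p1 (inv_nat (fact k)) ((D p0 p1 ^^ k) u))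
           (smult R p0 p1 (inv_nat (fact k)) ((D p0 p1 ^^ k) v))) {..<N}"
    by (rule M.finsum_cong') (auto simp: pow_add[OF kl o u v] HGlaws(1)[OF o] pow_hom[OF kl o] u v o)
  also have "\<dots> = sac.add R p0 p1 (finsum (HG R p0 p1) (\<lambda>k. smult R p0 p1 (inv_nat (fact k)) ((D p0 p1 ^^ k) u)) {..<N})
     (finsum (HG R p0 p1) (\<lambda>k. smult R p0 p1 (inv_nat (fact k)) ((D p0 p1 ^^ k) v)) {..<N})"
    using M.finsum_addf[of "\<lambda>k. smult R p0 p1 (inv_nat (fact k)) ((D p0 p1 ^^ k) u)" "{..<N}"
        "\<lambda>k. smult R p0 p1 (inv_nat (fact k)) ((D p0 p1 ^^ k) v)"] pow_hom[OF kl o] u v o by (simp add: Pi_def)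
  finally show ?thesis
    unfolding psum_finsum[OF kl o u] psum_finsum[OF kl o v] psum_finsum[OF kl o uv] .
qed

lemma psum_sm:
  assumes kl: "is_klinear_fam R D" and o: "p0 \<in> Ob R" "p1 \<in> Ob R" and u: "u \<in> Hom R p0 p1"
  shows "exp_psum R D p0 p1 (smult R p0 p1 a u) N = smult R p0 p1 a (exp_psum R D p0 p1 u N)"
proof -
  interpret M: kmod "HG R p0 p1" "smult R p0 p1" by (rule kmodHG[OF o])
  have au: "smult R p0 p1 a u \<in> Hom R p0 p1" using o u by simp
  have c: "smult R p0 p1 (inv_nat (fact k)) (smult R p0 p1 a x) = smult R p0 p1 a (smult R p0 p1 (inv_nat (fact k)) x)"
    if "x \<in> Hom R p0 p1" for x k using that M.sm_mult[symmetric] by (simp add: mult.commute)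
  show ?thesis
    unfolding psum_finsum[OF kl o u] psum_finsum[OF kl o au]
    by (subst M.sm_finsum) (auto simp: pow_sm[OF kl o u] c pow_hom[OF kl o u] o)
qed

lemma psum_hsub:
  assumes kl: "is_klinear_fam R D" and o: "p0 \<in> Ob R" "p1 \<in> Ob R" and u: "u \<in> Hom R p0 p1" and v: "v \<in> Hom R p0 p1"
  shows "exp_psum R D p0 p1 (hsub R p0 p1 u v) N = hsub R p0 p1 (exp_psum R D p0 p1 u N) (exp_psum R D p0 p1 v N)"
  unfolding hsub_def using psum_add[OF kl o u] psum_sm[OF kl o v] o u v by simp

lemma psum_Fil:
  assumes g: "good D" and o: "p0 \<in> Ob R" "p1 \<in> Ob R" and u: "u \<in> Fil R n p0 p1"
  shows "exp_psum R D p0 p1 u N \<in> Fil R n p0 p1"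
  by (induction N) (simp_all add: o good_powFil[OF g o u])

lemma psum_cg:
  assumes g: "good D" and o: "p0 \<in> Ob R" "p1 \<in> Ob R" and u: "u \<in> Hom R p0 p1" and v: "v \<in> Hom R p0 p1"
    and h: "hsub R p0 p1 u v \<in> Fil R n p0 p1"
  shows "hsub R p0 p1 (exp_psum R D p0 p1 u N) (exp_psum R D p0 p1 v N) \<in> Fil R n p0 p1"
  using psum_hsub[OF goodD(1)[OF g o] o u v] psum_Fil[OF g o h] by simp

lemma Ex_add:
  assumes g: "good D" and o: "p0 \<in> Ob R" "p1 \<in> Ob R" and u: "u \<in> Hom R p0 p1" and v: "v \<in> Hom R p0 p1"
  shows "der_exp R D p0 p1 (sac.add R p0 p1 u v) = sac.add R p0 p1 (der_exp R D p0 p1 u) (der_exp R D p0 p1 v)"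
proof (rule Ex_eqI[OF g o])
  note kl = goodD(1)[OF g o]
  show "sac.add R p0 p1 u v \<in> Hom R p0 p1" using o u v by simp
  show "sac.add R p0 p1 (der_exp R D p0 p1 u) (der_exp R D p0 p1 v) \<in> Hom R p0 p1" using Ex_hom[OF g o] o u v by simp
  fix n
  obtain T where T: "\<forall>N\<ge>T. \<forall>u\<in>Hom R p0 p1. hsub R p0 p1 (der_exp R D p0 p1 u) (exp_psum R D p0 p1 u N) \<in> Fil R n p0 p1"
    using Ex_approx[OF g o] by blast
  show "\<exists>T. \<forall>N\<ge>T. hsub R p0 p1 (sac.add R p0 p1 (der_exp R D p0 p1 u) (der_exp R D p0 p1 v))
          (exp_psum R D p0 p1 (sac.add R p0 p1 u v) N) \<in> Fil R n p0 p1"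
    using T u v by (auto simp: psum_add[OF kl o u v] intro!: cg_add[OF o] Ex_hom[OF g o] psum_hom[OF kl o])
qed

lemma Ex_sm:
  assumes g: "good D" and o: "p0 \<in> Ob R" "p1 \<in> Ob R" and u: "u \<in> Hom R p0 p1"
  shows "der_exp R D p0 p1 (smult R p0 p1 a u) = smult R p0 p1 a (der_exp R D p0 p1 u)"
proof (rule Ex_eqI[OF g o])
  note kl = goodD(1)[OF g o]
  show "smult R p0 p1 a u \<in> Hom R p0 p1" using o u by simp
  show "smult R p0 p1 a (der_exp R D p0 p1 u) \<in> Hom R p0 p1" using Ex_hom[OF g o] o u by simp
  fix n
  obtain T where T: "\<forall>N\<ge>T. \<forall>u\<in>Hom R p0 p1. hsub R p0 p1 (der_exp R D p0 p1 u) (exp_psum R D p0 p1 u N) \<in> Fil R n p0 p1"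
    using Ex_approx[OF g o] by blast
  show "\<exists>T. \<forall>N\<ge>T. hsub R p0 p1 (smult R p0 p1 a (der_exp R D p0 p1 u))
          (exp_psum R D p0 p1 (smult R p0 p1 a u) N) \<in> Fil R n p0 p1"
    using T u by (auto simp: psum_sm[OF kl o u] intro!: cg_sm[OF o] Ex_hom[OF g o] psum_hom[OF kl o])
qed

end

context sacl
begin

lemma mul_sm_l: "p0 \<in> Ob R \<Longrightarrow> p1 \<in> Ob R \<Longrightarrow> p2 \<in> Ob R \<Longrightarrow> u \<in> Hom R p0 p1 \<Longrightarrow> v \<in> Hom R p1 p2 \<Longrightarrow>
  mul R p0 p1 p2 (smult R p0 p1 a u) v = smult R p0 p2 a (mul R p0 p1 p2 u v)"
  using mul_lin(3)[of p0 p1 p2 u u v v] by simp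

lemma mul_sm_r: "p0 \<in> Ob R \<Longrightarrow> p1 \<in> Ob R \<Longrightarrow> p2 \<in> Ob R \<Longrightarrow> u \<in> Hom R p0 p1 \<Longrightarrow> v \<in> Hom R p1 p2 \<Longrightarrow>
  mul R p0 p1 p2 u (smult R p1 p2 a v) = smult R p0 p2 a (mul R p0 p1 p2 u v)"
  using mul_lin(4)[of p0 p1 p2 u u v v] by simp

lemma mul_add_l: "p0 \<in> Ob R \<Longrightarrow> p1 \<in> Ob R \<Longrightarrow> p2 \<in> Ob R \<Longrightarrow> u \<in> Hom R p0 p1 \<Longrightarrow> u' \<in> Hom R p0 p1 \<Longrightarrow> v \<in> Hom R p1 p2 \<Longrightarrow>
  mul R p0 p1 p2 (sac.add R p0 p1 u u') v = sac.add R p0 p2 (mul R p0 p1 p2 u v) (mul R p0 p1 p2 u' v)"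
  using mul_lin(1)[of p0 p1 p2 u u' v v] by simp

lemma mul_add_r: "p0 \<in> Ob R \<Longrightarrow> p1 \<in> Ob R \<Longrightarrow> p2 \<in> Ob R \<Longrightarrow> u \<in> Hom R p0 p1 \<Longrightarrow> v \<in> Hom R p1 p2 \<Longrightarrow> v' \<in> Hom R p1 p2 \<Longrightarrow>
  mul R p0 p1 p2 u (sac.add R p1 p2 v v') = sac.add R p0 p2 (mul R p0 p1 p2 u v) (mul R p0 p1 p2 u v')"
  using mul_lin(2)[of p0 p1 p2 u u v v'] by simp

lemma finsum_hom: assumes o: "p0 \<in> Ob R" "p1 \<in> Ob R" shows "(\<And>x. x \<in> A \<Longrightarrow> f x \<in> Hom R p0 p1) \<Longrightarrow> finsum (HG R p0 p1) f A \<in> Hom R p0 p1"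
proof -
  interpret M: kmod "HG R p0 p1" "smult R p0 p1" by (rule kmodHG[OF o])
  assume h: "\<And>x. x \<in> A \<Longrightarrow> f x \<in> Hom R p0 p1"
  show "finsum (HG R p0 p1) f A \<in> Hom R p0 p1"
    using M.finsum_closed[of f A] h unfolding Pi_def by auto
qed

lemma sm_swap: "p0 \<in> Ob R \<Longrightarrow> p1 \<in> Ob R \<Longrightarrow> x \<in> Hom R p0 p1 \<Longrightarrow>
   smult R p0 p1 a (smult R p0 p1 b x) = smult R p0 p1 b (smult R p0 p1 a x)"
  using HGlaws(3)[of p0 p1 x a b] HGlaws(3)[of p0 p1 x b a] by (simp add: mult.commute)

lemma cprod:
  fixes t :: "nat \<Rightarrow> nat \<Rightarrow> 'm" and N T n :: nat
  assumes o: "p0 \<in> Ob R" "p1 \<in> Ob R"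
    and Phi_add: "\<And>x y. x \<in> Hom R p0 p1 \<Longrightarrow> y \<in> Hom R p0 p1 \<Longrightarrow> Phi (sac.add R p0 p1 x y) = sac.add R p0 p1 (Phi x) (Phi y)"
    and Phi_sm: "\<And>x a. x \<in> Hom R p0 p1 \<Longrightarrow> Phi (smult R p0 p1 a x) = smult R p0 p1 a (Phi x)"
    and Phi_c: "\<And>x. x \<in> Hom R p0 p1 \<Longrightarrow> Phi x \<in> Hom R p0 p1"
    and tc: "\<And>a b. t a b \<in> Hom R p0 p1"
    and tP: "\<And>a b. Phi (t a b) = sac.add R p0 p1 (t (Suc a) b) (t a (Suc b))"
    and tS: "\<And>a b. T \<le> a \<or> T \<le> b \<Longrightarrow> t a b \<in> Fil R n p0 p1"
    and N: "2 * T \<le> N"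
  shows "hsub R p0 p1 (finsum (HG R p0 p1) (\<lambda>a. finsum (HG R p0 p1) (\<lambda>b. smult R p0 p1 (inv_nat (fact a) * inv_nat (fact b)) (t a b)) {..<N}) {..<N})
      (finsum (HG R p0 p1) (\<lambda>m. smult R p0 p1 (inv_nat (fact m)) ((Phi ^^ m) (t 0 0))) {..<N}) \<in> Fil R n p0 p1"
proof -
  interpret M: kmod "HG R p0 p1" "smult R p0 p1" by (rule kmodHG[OF o])
  let ?s = "\<lambda>a b. smult R p0 p1 (inv_nat (fact a) * inv_nat (fact b)) (t a b)"
  have sc: "\<And>a b. ?s a b \<in> Hom R p0 p1" using tc o by simp
  have B: "(Phi ^^ m) (t 0 0) = finsum (HG R p0 p1) (\<lambda>k. smult R p0 p1 (of_nat (m choose k)) (t k (m - k))) {..m}" for m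
    by (rule M.binom) (use Phi_add Phi_sm Phi_c tc tP in simp_all)
  have "smult R p0 p1 (inv_nat (fact m)) ((Phi ^^ m) (t 0 0)) = finsum (HG R p0 p1) (\<lambda>k. ?s k (m - k)) {..m}" for m
  proof -
    have "smult R p0 p1 (inv_nat (fact m)) ((Phi ^^ m) (t 0 0)) =
       finsum (HG R p0 p1) (\<lambda>k. smult R p0 p1 (inv_nat (fact m)) (smult R p0 p1 (of_nat (m choose k)) (t k (m - k)))) {..m}"
      unfolding B by (subst M.sm_finsum) (auto simp: tc o)
    also have "\<dots> = finsum (HG R p0 p1) (\<lambda>k. ?s k (m - k)) {..m}"
    proof (rule M.finsum_cong')
      fix k assume "k \<in> {..m}"
      then show "smult R p0 p1 (inv_nat (fact m)) (smult R p0 p1 (of_nat (m choose k)) (t k (m - k))) = ?s k (m - k)"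
        using HGlaws(3)[OF o, symmetric] inv_fact_binom[of k m] tc by simp
    qed (auto simp: sc)
    finally show ?thesis .
  qed
  then have E: "finsum (HG R p0 p1) (\<lambda>m. smult R p0 p1 (inv_nat (fact m)) ((Phi ^^ m) (t 0 0))) {..<N} =
      finsum (HG R p0 p1) (\<lambda>m. finsum (HG R p0 p1) (\<lambda>k. ?s k (m - k)) {..m}) {..<N}" by simp
  have sS: "\<And>a b. T \<le> a \<or> T \<le> b \<Longrightarrow> ?s a b \<in> Fil R n p0 p1" using tS o by simp
  have "finsum (HG R p0 p1) (\<lambda>a. finsum (HG R p0 p1) (\<lambda>b. ?s a b) {..<N}) {..<N} \<ominus>\<^bsub>HG R p0 p1\<^esub>
     finsum (HG R p0 p1) (\<lambda>m. finsum (HG R p0 p1) (\<lambda>k. ?s k (m - k)) {..m}) {..<N} \<in> Fil R n p0 p1"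
    apply (rule M.tri_sq[of ?s "Fil R n p0 p1" T N])
       apply (simp add: sc)
      apply (rule Fil_submod[OF o])
     apply (rule sS, assumption)
    apply (rule N)
    done
  moreover have "finsum (HG R p0 p1) (\<lambda>m. finsum (HG R p0 p1) (\<lambda>k. ?s k (m - k)) {..m}) {..<N} \<in> Hom R p0 p1"
    by (intro finsum_hom[OF o] sc)
  ultimately show ?thesis unfolding E using hsub_eq[OF o] by simp
qed

lemma mul_finsum_l:
  assumes o: "p0 \<in> Ob R" "p1 \<in> Ob R" "p2 \<in> Ob R" and v: "v \<in> Hom R p1 p2" and f: "\<And>i. f i \<in> Hom R p0 p1"
    and fin: "finite A"
  shows "mul R p0 p1 p2 (finsum (HG R p0 p1) f A) v = finsum (HG R p0 p2) (\<lambda>i. mul R p0 p1 p2 (f i) v) A"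
proof -
  interpret M1: kmod "HG R p0 p1" "smult R p0 p1" by (rule kmodHG[OF o(1,2)])
  interpret M2: kmod "HG R p0 p2" "smult R p0 p2" by (rule kmodHG[OF o(1,3)])
  show ?thesis
    by (rule hom_finsum[OF M1.abelian_group_axioms M2.abelian_group_axioms])
       (use o v f fin mul_add_l mul_zer(1)[OF o hom_zer[OF o(1,2)] v] in auto)
qed

lemma mul_finsum_r:
  assumes o: "p0 \<in> Ob R" "p1 \<in> Ob R" "p2 \<in> Ob R" and u: "u \<in> Hom R p0 p1" and f: "\<And>i. f i \<in> Hom R p1 p2"
    and fin: "finite A"
  shows "mul R p0 p1 p2 u (finsum (HG R p1 p2) f A) = finsum (HG R p0 p2) (\<lambda>i. mul R p0 p1 p2 u (f i)) A"
proof -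
  interpret M1: kmod "HG R p1 p2" "smult R p1 p2" by (rule kmodHG[OF o(2,3)])
  interpret M2: kmod "HG R p0 p2" "smult R p0 p2" by (rule kmodHG[OF o(1,3)])
  show ?thesis
    by (rule hom_finsum[OF M1.abelian_group_axioms M2.abelian_group_axioms])
       (use o u f fin mul_add_r mul_zer(2)[OF o u hom_zer[OF o(2,3)]] in auto)
qed

lemma derD:
  assumes "is_derivation R D" "p0 \<in> Ob R" "p1 \<in> Ob R" "p2 \<in> Ob R" "u \<in> Hom R p0 p1" "v \<in> Hom R p1 p2"
  shows "D p0 p2 (mul R p0 p1 p2 u v) = sac.add R p0 p2 (mul R p0 p1 p2 (D p0 p1 u) v) (mul R p0 p1 p2 u (D p1 p2 v))"
  using assms unfolding is_derivation_def by simp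

lemma Ex_mul:
  assumes g: "good D" and d: "is_derivation R D" and o: "p0 \<in> Ob R" "p1 \<in> Ob R" "p2 \<in> Ob R"
    and u: "u \<in> Hom R p0 p1" and v: "v \<in> Hom R p1 p2"
  shows "der_exp R D p0 p2 (mul R p0 p1 p2 u v) = mul R p0 p1 p2 (der_exp R D p0 p1 u) (der_exp R D p1 p2 v)"
proof (rule Ex_eqI[OF g o(1,3)])
  note kl1 = goodD(1)[OF g o(1,2)] and kl2 = goodD(1)[OF g o(2,3)] and kl3 = goodD(1)[OF g o(1,3)]
  show "mul R p0 p1 p2 u v \<in> Hom R p0 p2" using o u v by simp
  show "mul R p0 p1 p2 (der_exp R D p0 p1 u) (der_exp R D p1 p2 v) \<in> Hom R p0 p2"
    using Ex_hom[OF g o(1,2) u] Ex_hom[OF g o(2,3) v] o by simp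
  fix n
  obtain T1 where T1: "\<forall>k\<ge>T1. \<forall>x\<in>Hom R p0 p1. (D p0 p1 ^^ k) x \<in> Fil R n p0 p1" using goodT[OF g o(1,2)] by blast
  obtain T2 where T2: "\<forall>k\<ge>T2. \<forall>x\<in>Hom R p1 p2. (D p1 p2 ^^ k) x \<in> Fil R n p1 p2" using goodT[OF g o(2,3)] by blast
  obtain A1 where A1: "\<forall>N\<ge>A1. \<forall>u\<in>Hom R p0 p1. hsub R p0 p1 (der_exp R D p0 p1 u) (exp_psum R D p0 p1 u N) \<in> Fil R n p0 p1"
    using Ex_approx[OF g o(1,2)] by blast
  obtain A2 where A2: "\<forall>N\<ge>A2. \<forall>u\<in>Hom R p1 p2. hsub R p1 p2 (der_exp R D p1 p2 u) (exp_psum R D p1 p2 u N) \<in> Fil R n p1 p2"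
    using Ex_approx[OF g o(2,3)] by blast
  let ?T = "max T1 T2"
  let ?t = "\<lambda>a b. mul R p0 p1 p2 ((D p0 p1 ^^ a) u) ((D p1 p2 ^^ b) v)"
  have tc: "?t a b \<in> Hom R p0 p2" for a b using pow_hom[OF kl1 o(1,2) u] pow_hom[OF kl2 o(2,3) v] o by simp
  show "\<exists>T. \<forall>N\<ge>T. hsub R p0 p2 (mul R p0 p1 p2 (der_exp R D p0 p1 u) (der_exp R D p1 p2 v))
          (exp_psum R D p0 p2 (mul R p0 p1 p2 u v) N) \<in> Fil R n p0 p2"
  proof (intro exI allI impI)
    interpret M3: kmod "HG R p0 p2" "smult R p0 p2" by (rule kmodHG[OF o(1,3)])
    fix N assume N: "max (max A1 A2) (2 * ?T) \<le> N"
    let ?eu = "der_exp R D p0 p1 u" and ?ev = "der_exp R D p1 p2 v"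
    let ?pu = "exp_psum R D p0 p1 u N" and ?pv = "exp_psum R D p1 p2 v N"
    have c1: "hsub R p0 p2 (mul R p0 p1 p2 ?eu ?ev) (mul R p0 p1 p2 ?pu ?pv) \<in> Fil R n p0 p2"
      by (rule cg_mul[OF o Ex_hom[OF g o(1,2) u] psum_hom[OF kl1 o(1,2) u] Ex_hom[OF g o(2,3) v] psum_hom[OF kl2 o(2,3) v]])
         (use A1 A2 N u v in auto)
    have "mul R p0 p1 p2 ?pu ?pv = finsum (HG R p0 p2) (\<lambda>a. finsum (HG R p0 p2) (\<lambda>b.
        smult R p0 p2 (inv_nat (fact a) * inv_nat (fact b)) (?t a b)) {..<N}) {..<N}"
    proof -
      have "mul R p0 p1 p2 ?pu ?pv = finsum (HG R p0 p2) (\<lambda>a. mul R p0 p1 p2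
          (smult R p0 p1 (inv_nat (fact a)) ((D p0 p1 ^^ a) u)) ?pv) {..<N}"
        unfolding psum_finsum[OF kl1 o(1,2) u]
        by (rule mul_finsum_l[OF o psum_hom[OF kl2 o(2,3) v]]) (use pow_hom[OF kl1 o(1,2) u] o in auto)
      also have "\<dots> = finsum (HG R p0 p2) (\<lambda>a. finsum (HG R p0 p2) (\<lambda>b.
        smult R p0 p2 (inv_nat (fact a) * inv_nat (fact b)) (?t a b)) {..<N}) {..<N}"
      proof (rule M3.finsum_cong')
        fix a
        show "mul R p0 p1 p2 (smult R p0 p1 (inv_nat (fact a)) ((D p0 p1 ^^ a) u)) ?pv =
           finsum (HG R p0 p2) (\<lambda>b. smult R p0 p2 (inv_nat (fact a) * inv_nat (fact b)) (?t a b)) {..<N}"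
          unfolding psum_finsum[OF kl2 o(2,3) v]
          apply (subst mul_finsum_r[OF o])
          apply (use pow_hom[OF kl1 o(1,2) u] pow_hom[OF kl2 o(2,3) v] o in auto)[3]
          apply (rule M3.finsum_cong')
          using pow_hom[OF kl1 o(1,2) u] pow_hom[OF kl2 o(2,3) v] o
          by (auto simp: mul_sm_l mul_sm_r HGlaws(3)[OF o(1,3)] Pi_def sm_swap[OF o(1,3)])
      next
        show "(\<lambda>a. finsum (HG R p0 p2) (\<lambda>b. smult R p0 p2 (inv_nat (fact a) * inv_nat (fact b)) (?t a b)) {..<N}) \<in> {..<N} \<rightarrow> carrier (HG R p0 p2)"
          using tc o by (auto intro!: finsum_hom[OF o(1,3)])
      qed simp
      finally show ?thesis .
    qed
    moreover have "exp_psum R D p0 p2 (mul R p0 p1 p2 u v) N =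
       finsum (HG R p0 p2) (\<lambda>m. smult R p0 p2 (inv_nat (fact m)) ((D p0 p2 ^^ m) (?t 0 0))) {..<N}"
      using psum_finsum[OF kl3 o(1,3), of "mul R p0 p1 p2 u v"] u v o by simp
    moreover have "hsub R p0 p2 (finsum (HG R p0 p2) (\<lambda>a. finsum (HG R p0 p2) (\<lambda>b.
        smult R p0 p2 (inv_nat (fact a) * inv_nat (fact b)) (?t a b)) {..<N}) {..<N})
        (finsum (HG R p0 p2) (\<lambda>m. smult R p0 p2 (inv_nat (fact m)) ((D p0 p2 ^^ m) (?t 0 0))) {..<N}) \<in> Fil R n p0 p2"
    proof (rule cprod[OF o(1,3), where T = ?T])
      show "\<And>x y. x \<in> Hom R p0 p2 \<Longrightarrow> y \<in> Hom R p0 p2 \<Longrightarrow> D p0 p2 (sac.add R p0 p2 x y) = sac.add R p0 p2 (D p0 p2 x) (D p0 p2 y)"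
        using klinD[OF kl3 o(1,3)] by simp
      show "\<And>x a. x \<in> Hom R p0 p2 \<Longrightarrow> D p0 p2 (smult R p0 p2 a x) = smult R p0 p2 a (D p0 p2 x)"
        using klinD[OF kl3 o(1,3)] by simp
      show "\<And>x. x \<in> Hom R p0 p2 \<Longrightarrow> D p0 p2 x \<in> Hom R p0 p2" using klinD[OF kl3 o(1,3)] by simp
      show "\<And>a b. ?t a b \<in> Hom R p0 p2" by (rule tc)
      show "\<And>a b. D p0 p2 (?t a b) = sac.add R p0 p2 (?t (Suc a) b) (?t a (Suc b))"
        using derD[OF d o] pow_hom[OF kl1 o(1,2) u] pow_hom[OF kl2 o(2,3) v] by simp
      show "2 * ?T \<le> N" using N by simp
      fix a b assume ab: "?T \<le> a \<or> ?T \<le> b"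
      show "?t a b \<in> Fil R n p0 p2"
      proof (cases "T1 \<le> a")
        case True
        then have "(D p0 p1 ^^ a) u \<in> Fil R n p0 p1" using T1 u by simp
        then show ?thesis using Fil_mul[OF o, of _ n _ 0] pow_hom[OF kl2 o(2,3) v] Fil0[OF o(2,3)] by force
      next
        case False
        then have "T2 \<le> b" using ab by simp
        then have "(D p1 p2 ^^ b) v \<in> Fil R n p1 p2" using T2 v by simp
        then show ?thesis using Fil_mul[OF o, of _ 0 _ n] pow_hom[OF kl1 o(1,2) u] Fil0[OF o(1,2)] by force
      qed
    qed
    ultimately have c2: "hsub R p0 p2 (mul R p0 p1 p2 ?pu ?pv) (exp_psum R D p0 p2 (mul R p0 p1 p2 u v) N) \<in> Fil R n p0 p2"
      by simp
    show "hsub R p0 p2 (mul R p0 p1 p2 ?eu ?ev) (exp_psum R D p0 p2 (mul R p0 p1 p2 u v) N) \<in> Fil R n p0 p2"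
      by (rule cg_trans[OF o(1,3) _ _ _ c1 c2])
         (use Ex_hom[OF g o(1,2) u] Ex_hom[OF g o(2,3) v] psum_hom[OF kl1 o(1,2) u] psum_hom[OF kl2 o(2,3) v]
            psum_hom[OF kl3 o(1,3)] o u v in auto)
  qed
qed

end

context kmod
begin

lemma lin_comb_add:
  assumes "finite A" "\<And>k. b k \<in> carrier G"
  shows "finsum G (\<lambda>k. sm (c k) (b k)) A \<oplus> finsum G (\<lambda>k. sm (c' k) (b k)) A = finsum G (\<lambda>k. sm (c k + c' k) (b k)) A"
proof -
  have "finsum G (\<lambda>k. sm (c k + c' k) (b k)) A = finsum G (\<lambda>k. sm (c k) (b k) \<oplus> sm (c' k) (b k)) A"
    by (rule finsum_cong') (use assms in \<open>auto simp: sm_add_l\<close>)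
  also have "\<dots> = finsum G (\<lambda>k. sm (c k) (b k)) A \<oplus> finsum G (\<lambda>k. sm (c' k) (b k)) A"
    by (rule finsum_addf) (use assms in auto)
  finally show ?thesis by simp
qed

lemma lin_comb_sm:
  assumes "finite A" "\<And>k. b k \<in> carrier G"
  shows "sm a (finsum G (\<lambda>k. sm (c k) (b k)) A) = finsum G (\<lambda>k. sm (a * c k) (b k)) A"
proof -
  have "sm a (finsum G (\<lambda>k. sm (c k) (b k)) A) = finsum G (\<lambda>k. sm a (sm (c k) (b k))) A"
    by (rule sm_finsum) (use assms in auto)
  also have "\<dots> = finsum G (\<lambda>k. sm (a * c k) (b k)) A"
    by (rule finsum_cong') (use assms in \<open>auto simp: sm_mult\<close>)
  finally show ?thesis .
qed

lemma poly_coeffs: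
  assumes KQ: "\<forall>n::nat. n > 0 \<longrightarrow> (\<exists>r::'k. of_nat n * r = 1)" and S: "submod S"
  shows "(\<And>k. b k \<in> carrier G) \<Longrightarrow> (\<And>m::nat. finsum G (\<lambda>k. sm ((of_nat m) ^ k) (b k)) {..<N} \<in> S) \<Longrightarrow> k < N \<Longrightarrow> b k \<in> S"
proof (induction N arbitrary: b k)
  case 0 then show ?case by simp
next
  case (Suc N)
  note bc = Suc.prems(1)
  let ?c = "\<lambda>k. sm ((2::'k) ^ k - 2 ^ N) (b k)"
  have cc: "?c k \<in> carrier G" for k using bc by simp
  have Q: "finsum G (\<lambda>k. sm ((of_nat m) ^ k) (?c k)) {..<N} \<in> S" for m :: nat
  proof -
    have P2: "finsum G (\<lambda>k. sm ((of_nat (2 * m)) ^ k) (b k)) {..<Suc N} \<in> S" using Suc.prems(2) .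
    have P1: "sm (- (2 ^ N)) (finsum G (\<lambda>k. sm ((of_nat m) ^ k) (b k)) {..<Suc N}) \<in> S"
      using Suc.prems(2) submodD(4)[OF S] by blast
    have "finsum G (\<lambda>k. sm ((of_nat (2 * m)) ^ k) (b k)) {..<Suc N} \<oplus>
          sm (- (2 ^ N)) (finsum G (\<lambda>k. sm ((of_nat m) ^ k) (b k)) {..<Suc N})
        = finsum G (\<lambda>k. sm ((of_nat (2 * m)) ^ k + (- (2 ^ N)) * (of_nat m) ^ k) (b k)) {..<Suc N}"
      by (simp add: lin_comb_sm lin_comb_add bc)
    also have "\<dots> = sm ((of_nat (2 * m)) ^ N + (- (2 ^ N)) * (of_nat m) ^ N) (b N) \<oplus>
        finsum G (\<lambda>k. sm ((of_nat (2 * m)) ^ k + (- (2 ^ N)) * (of_nat m) ^ k) (b k)) {..<N}"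
      unfolding lessThan_Suc by (subst finsum_insert) (auto simp: bc)
    also have "sm ((of_nat (2 * m)) ^ N + (- (2 ^ N)) * (of_nat m) ^ N) (b N) = \<zero>"
      using bc by (simp add: power_mult_distrib)
    also have "finsum G (\<lambda>k. sm ((of_nat (2 * m)) ^ k + (- (2 ^ N)) * (of_nat m) ^ k) (b k)) {..<N}
        = finsum G (\<lambda>k. sm ((of_nat m) ^ k) (?c k)) {..<N}"
    proof (rule finsum_cong')
      fix k
      have "(of_nat (2 * m) :: 'k) ^ k + (- (2 ^ N)) * (of_nat m) ^ k = (of_nat m) ^ k * (2 ^ k - 2 ^ N)"
        by (simp add: power_mult_distrib algebra_simps)
      then show "sm ((of_nat (2 * m)) ^ k + (- (2 ^ N)) * (of_nat m) ^ k) (b k) = sm ((of_nat m) ^ k) (?c k)"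
        using bc sm_mult by simp
    qed (auto simp: cc)
    finally have "finsum G (\<lambda>k. sm ((of_nat (2 * m)) ^ k) (b k)) {..<Suc N} \<oplus>
          sm (- (2 ^ N)) (finsum G (\<lambda>k. sm ((of_nat m) ^ k) (b k)) {..<Suc N})
        = finsum G (\<lambda>k. sm ((of_nat m) ^ k) (?c k)) {..<N}"
      using cc by (simp add: finsum_closed Pi_def)
    then show ?thesis using submodD(3)[OF S P2 P1] by simp
  qed
  have cS: "?c k \<in> S" if "k < N" for k using Suc.IH[of ?c k, OF cc Q that] .
  have bS: "b k \<in> S" if "k < N" for k
  proof -
    have pos: "2 ^ N - 2 ^ k > (0::nat)" using that by (simp add: power_strict_increasing)
    obtain r :: 'k where r: "of_nat (2 ^ N - 2 ^ k) * r = 1" using KQ pos by blast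
    have e: "(of_nat (2 ^ N - 2 ^ k) :: 'k) = 2 ^ N - 2 ^ k"
      using that by (simp add: of_nat_diff power_increasing)
    have "sm (- r) (?c k) = sm (- r * (2 ^ k - 2 ^ N)) (b k)" using sm_mult[of "b k" "-r" "2 ^ k - 2 ^ N", symmetric] bc by simp
    also have "- r * (2 ^ k - 2 ^ N) = (of_nat (2 ^ N - 2 ^ k) :: 'k) * r" unfolding e by (simp add: algebra_simps)
    finally have "sm (- r) (?c k) = b k" using r bc by simp
    then show ?thesis using submodD(4)[OF S cS[OF that], of "- r"] by simp
  qed
  show ?case
  proof (cases "k < N")
    case True then show ?thesis using bS by simp
  next
    case False
    then have kN: "k = N" using Suc.prems(3) by simp
    have "finsum G (\<lambda>k. sm ((of_nat (1::nat)) ^ k) (b k)) {..<Suc N} \<in> S" using Suc.prems(2) .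
    then have P: "b N \<oplus> finsum G b {..<N} \<in> S"
      unfolding lessThan_Suc using bc by (simp add: finsum_insert Pi_def)
    have "finsum G b {..<N} \<in> S" by (rule submod_finsum[OF S]) (auto intro: bS)
    then have "(b N \<oplus> finsum G b {..<N}) \<ominus> finsum G b {..<N} \<in> S" using submod_minus[OF S P] by simp
    moreover have "(b N \<oplus> finsum G b {..<N}) \<ominus> finsum G b {..<N} = b N"
      using bc by (simp add: a_minus_def a_assoc r_neg finsum_closed Pi_def)
    ultimately show ?thesis using kN by simp
  qed
qed

end

context sacl
begin

lemma condD:
  assumes "cond_i_iii R D"
  shows "is_derivation R D" "is_klinear_fam R D"
    "p0 \<in> Ob R \<Longrightarrow> p1 \<in> Ob R \<Longrightarrow> u \<in> Fil R l p0 p1 \<Longrightarrow> D p0 p1 u \<in> Fil R l p0 p1"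
    "p0 \<in> Ob R \<Longrightarrow> p1 \<in> Ob R \<Longrightarrow> \<exists>\<nu>::nat. \<nu> > 0 \<and> (\<forall>u\<in>Fil R 1 p0 p1. (D p0 p1 ^^ \<nu>) u \<in> Fil R 2 p0 p1)"
    "p0 \<in> Ob R \<Longrightarrow> p1 \<in> Ob R \<Longrightarrow> u \<in> Hom R p0 p1 \<Longrightarrow> D p0 p1 u \<in> Fil R 1 p0 p1"
  using assms unfolding cond_i_iii_def in_FDer_def is_derivation_def by simp_all

lemma prod_nil:
  assumes d: "is_derivation R D" and F: "\<And>p0 p1 l u. p0 \<in> Ob R \<Longrightarrow> p1 \<in> Ob R \<Longrightarrow> u \<in> Fil R l p0 p1 \<Longrightarrow> D p0 p1 u \<in> Fil R l p0 p1"
    and o: "p0 \<in> Ob R" "p1 \<in> Ob R" "p2 \<in> Ob R"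
    and x: "x \<in> Fil R i p0 p1" and y: "y \<in> Fil R j p1 p2"
    and hx: "(D p0 p1 ^^ A) x \<in> Fil R (Suc i) p0 p1" and hy: "(D p1 p2 ^^ B) y \<in> Fil R (Suc j) p1 p2"
  shows "(D p0 p2 ^^ (A + B)) (mul R p0 p1 p2 x y) \<in> Fil R (Suc (i + j)) p0 p2"
proof -
  have kl: "is_klinear_fam R D" using d unfolding is_derivation_def by simp
  interpret M: kmod "HG R p0 p2" "smult R p0 p2" by (rule kmodHG[OF o(1,3)])
  have xh: "x \<in> Hom R p0 p1" using Fil_hom[OF o(1,2) x] .
  have yh: "y \<in> Hom R p1 p2" using Fil_hom[OF o(2,3) y] .
  let ?t = "\<lambda>a b. mul R p0 p1 p2 ((D p0 p1 ^^ a) x) ((D p1 p2 ^^ b) y)"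
  have tc: "?t a b \<in> Hom R p0 p2" for a b using pow_hom[OF kl o(1,2) xh] pow_hom[OF kl o(2,3) yh] o by simp
  have B: "(D p0 p2 ^^ (A + B)) (?t 0 0) = finsum (HG R p0 p2) (\<lambda>k. smult R p0 p2 (of_nat ((A + B) choose k)) (?t k (A + B - k))) {..A + B}"
    apply (rule M.binom)
    using klinD[OF kl o(1,3)] tc derD[OF d o] pow_hom[OF kl o(1,2) xh] pow_hom[OF kl o(2,3) yh] by simp_all
  have PF: "\<And>p0 p1 l u k. p0 \<in> Ob R \<Longrightarrow> p1 \<in> Ob R \<Longrightarrow> u \<in> Fil R l p0 p1 \<Longrightarrow> (D p0 p1 ^^ k) u \<in> Fil R l p0 p1"
  proof -
    fix p0 p1 l u k assume a: "p0 \<in> Ob R" "p1 \<in> Ob R" "u \<in> Fil R l p0 p1"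
    show "(D p0 p1 ^^ k) u \<in> Fil R l p0 p1" by (rule pow_Fil[of l p0 p1 D, OF F[OF a(1,2)] a(3)])
  qed
  have tS: "?t k (A + B - k) \<in> Fil R (Suc (i + j)) p0 p2" for k
  proof (cases "A \<le> k")
    case True
    have "(D p0 p1 ^^ k) x = (D p0 p1 ^^ (k - A)) ((D p0 p1 ^^ A) x)"
      using True by (metis funpow_add le_add_diff_inverse2 o_apply)
    then have 1: "(D p0 p1 ^^ k) x \<in> Fil R (Suc i) p0 p1" using PF[OF o(1,2) hx] by simp
    have 2: "(D p1 p2 ^^ (A + B - k)) y \<in> Fil R j p1 p2" using PF[OF o(2,3) y] .
    show ?thesis using Fil_mul[OF o 1 2] by simp
  next
    case False
    then have kB: "B \<le> A + B - k" by simp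
    have "(D p1 p2 ^^ (A + B - k)) y = (D p1 p2 ^^ (A + B - k - B)) ((D p1 p2 ^^ B) y)"
      using kB by (metis funpow_add le_add_diff_inverse2 o_apply)
    then have 2: "(D p1 p2 ^^ (A + B - k)) y \<in> Fil R (Suc j) p1 p2" using PF[OF o(2,3) hy] by simp
    have 1: "(D p0 p1 ^^ k) x \<in> Fil R i p0 p1" using PF[OF o(1,2) x] .
    show ?thesis using Fil_mul[OF o 1 2] by simp
  qed
  have "finsum (HG R p0 p2) (\<lambda>k. smult R p0 p2 (of_nat ((A + B) choose k)) (?t k (A + B - k))) {..A + B} \<in> Fil R (Suc (i + j)) p0 p2"
    by (rule M.submod_finsum[OF Fil_submod[OF o(1,3)]]) (use tS o in auto)
  then show ?thesis using B by simp
qed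

definition nilp :: "('o, 'm) famap \<Rightarrow> 'o \<Rightarrow> 'o \<Rightarrow> nat \<Rightarrow> bool" where
  "nilp D p0 p1 l \<longleftrightarrow> (\<exists>N. \<forall>x\<in>Fil R l p0 p1. (D p0 p1 ^^ N) x \<in> Fil R (Suc l) p0 p1)"


lemma lprod_Fil:
  assumes q: "q \<in> Ob R"
  shows "us \<noteq> [] \<Longrightarrow> set us \<subseteq> Fil R 1 q q \<Longrightarrow> lprod R q us \<in> Fil R (length us) q q"
proof (induction us)
  case Nil then show ?case by simp
next
  case (Cons u us)
  show ?case
  proof (cases "us = []")
    case True then show ?thesis using Cons by simp
  next
    case False
    then obtain v vs where us: "us = v # vs" by (cases us) auto
    have "lprod R q (u # us) = mul R q q q u (lprod R q us)" using us by simp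
    moreover have "lprod R q us \<in> Fil R (length us) q q" using Cons False by simp
    moreover have "u \<in> Fil R 1 q q" using Cons by simp
    ultimately show ?thesis using Fil_mul[OF q q q, of u 1 "lprod R q us" "length us"] by simp
  qed
qed

lemma lprod_nil:
  assumes d: "is_derivation R D" and F: "\<And>p0 p1 l u. p0 \<in> Ob R \<Longrightarrow> p1 \<in> Ob R \<Longrightarrow> u \<in> Fil R l p0 p1 \<Longrightarrow> D p0 p1 u \<in> Fil R l p0 p1"
    and q: "q \<in> Ob R" and nu: "\<forall>u\<in>Fil R 1 q q. (D q q ^^ \<nu>) u \<in> Fil R 2 q q"
  shows "us \<noteq> [] \<Longrightarrow> set us \<subseteq> Fil R 1 q q \<Longrightarrow> (D q q ^^ (length us * \<nu>)) (lprod R q us) \<in> Fil R (Suc (length us)) q q"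
proof (induction us)
  case Nil then show ?case by simp
next
  case (Cons u us)
  show ?case
  proof (cases "us = []")
    case True then show ?thesis using Cons nu by (simp add: numeral_2_eq_2)
  next
    case False
    then obtain v vs where us: "us = v # vs" by (cases us) auto
    have l: "lprod R q (u # us) = mul R q q q u (lprod R q us)" using us by simp
    have u: "u \<in> Fil R 1 q q" using Cons by simp
    have hu: "(D q q ^^ \<nu>) u \<in> Fil R (Suc 1) q q" using nu u by (simp add: numeral_2_eq_2)
    have y: "lprod R q us \<in> Fil R (length us) q q" using lprod_Fil[OF q] Cons False by simp
    have hy: "(D q q ^^ (length us * \<nu>)) (lprod R q us) \<in> Fil R (Suc (length us)) q q" using Cons False by simp
    have "(D q q ^^ (\<nu> + length us * \<nu>)) (mul R q q q u (lprod R q us)) \<in> Fil R (Suc (1 + length us)) q q"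
      by (rule prod_nil[OF d F q q q u y hu hy])
    then show ?thesis using l by simp
  qed
qed

lemma finsums_hom:
  assumes q: "q \<in> Ob R" and S: "S \<subseteq> Hom R q q"
  shows "x \<in> finsums R q q S \<Longrightarrow> x \<in> Hom R q q"
  by (induction rule: finsums.induct) (use q S in auto)

lemma finsums_pow:
  assumes kl: "is_klinear_fam R D" and q: "q \<in> Ob R" and S: "S \<subseteq> Hom R q q"
    and h: "\<And>s. s \<in> S \<Longrightarrow> (D q q ^^ N) s \<in> Fil R m q q"
  shows "x \<in> finsums R q q S \<Longrightarrow> (D q q ^^ N) x \<in> Fil R m q q"
proof (induction rule: finsums.induct)
  case 1 then show ?case using pow_zer[OF kl q q] q by simp
next
  case (2 x y)
  have "y \<in> Hom R q q" using finsums_hom[OF q S 2(2)] .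
  moreover have "x \<in> Hom R q q" using 2(1) S by blast
  ultimately show ?case using pow_add[OF kl q q] 2 h q by simp
qed

lemma C2D: "q \<in> Ob R \<Longrightarrow> n \<ge> 1 \<Longrightarrow> x \<in> Fil R n q q \<Longrightarrow>
  \<exists>s\<in>finsums R q q {lprod R q us | us. length us = n \<and> set us \<subseteq> Fil R 1 q q}.
     \<exists>y\<in>Fil R (n + 1) q q. x = sac.add R q q s y"
  using C2 unfolding cond_C2_def by simp

lemma nilp_qq:
  assumes c: "cond_i_iii R D" and q: "q \<in> Ob R" and l: "l \<ge> 1"
  shows "nilp D q q l"
proof -
  note d = condD(1)[OF c] and kl = condD(2)[OF c] and F = condD(3)[OF c]
  obtain \<nu> where nu: "\<forall>u\<in>Fil R 1 q q. (D q q ^^ \<nu>) u \<in> Fil R 2 q q" using condD(4)[OF c q q] by blast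
  let ?S = "{lprod R q us | us. length us = l \<and> set us \<subseteq> Fil R 1 q q}"
  have S: "?S \<subseteq> Hom R q q"
  proof
    fix s assume "s \<in> ?S"
    then obtain us where us: "s = lprod R q us" "length us = l" "set us \<subseteq> Fil R 1 q q" by blast
    then have "us \<noteq> []" using l by auto
    then have "lprod R q us \<in> Fil R l q q" using lprod_Fil[OF q _ us(3)] us(2) by simp
    then show "s \<in> Hom R q q" using Fil_hom[OF q q] us(1) by simp
  qed
  have hS: "(D q q ^^ (l * \<nu>)) s \<in> Fil R (Suc l) q q" if "s \<in> ?S" for s
  proof -
    obtain us where us: "s = lprod R q us" "length us = l" "set us \<subseteq> Fil R 1 q q" using \<open>s \<in> ?S\<close> by blast
    then have "us \<noteq> []" using l by auto
    then show ?thesis using lprod_nil[OF d F q nu, of us] us by simp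
  qed
  have "(D q q ^^ (l * \<nu>)) x \<in> Fil R (Suc l) q q" if x: "x \<in> Fil R l q q" for x
  proof -
    obtain s y where sy: "s \<in> finsums R q q ?S" "y \<in> Fil R (l + 1) q q" "x = sac.add R q q s y"
      using C2D[OF q l x] by blast
    have 1: "(D q q ^^ (l * \<nu>)) s \<in> Fil R (Suc l) q q" by (rule finsums_pow[OF kl q S hS sy(1)])
    have 2: "(D q q ^^ (l * \<nu>)) y \<in> Fil R (Suc l) q q" using pow_Fil[of "Suc l" q q D, OF F[OF q q]] sy(2) by simp
    have "s \<in> Hom R q q" using finsums_hom[OF q S sy(1)] .
    moreover have "y \<in> Hom R q q" using Fil_hom[OF q q sy(2)] .
    ultimately show ?thesis using sy(3) pow_add[OF kl q q] 1 2 q by simp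
  qed
  then show ?thesis unfolding nilp_def by blast
qed

lemma nilp_all:
  assumes c: "cond_i_iii R D" and o: "p0 \<in> Ob R" "p1 \<in> Ob R"
  shows "nilp D p0 p1 l"
proof -
  note d = condD(1)[OF c] and kl = condD(2)[OF c] and F = condD(3)[OF c]
  have n0: "\<forall>x\<in>Fil R 0 p0 p1. (D p0 p1 ^^ 1) x \<in> Fil R (Suc 0) p0 p1" using condD(5)[OF c o] Fil0[OF o] by simp
  show ?thesis
  proof (cases "l = 0")
    case True then show ?thesis using n0 unfolding nilp_def by blast
  next
    case False
    show ?thesis using iso_cases[OF o]
    proof
      assume H: "Hom R p0 p1 = {zer R p0 p1}"
      have "\<forall>x\<in>Fil R l p0 p1. (D p0 p1 ^^ 0) x \<in> Fil R (Suc l) p0 p1"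
      proof
        fix x assume "x \<in> Fil R l p0 p1"
        then have "x = zer R p0 p1" using Fil_hom[OF o] H by blast
        then show "(D p0 p1 ^^ 0) x \<in> Fil R (Suc l) p0 p1" using o by simp
      qed
      then show ?thesis unfolding nilp_def by blast
    next
      assume "\<exists>u v. u \<in> Hom R p0 p1 \<and> v \<in> Hom R p1 p0 \<and> mul R p0 p1 p0 u v = idm R p0 \<and> mul R p1 p0 p1 v u = idm R p1"
      then obtain u v where uv: "u \<in> Hom R p0 p1" "v \<in> Hom R p1 p0" "mul R p0 p1 p0 u v = idm R p0" by blast
      obtain B where B: "\<forall>w\<in>Fil R l p1 p1. (D p1 p1 ^^ B) w \<in> Fil R (Suc l) p1 p1"
        using nilp_qq[OF c o(2)] False unfolding nilp_def by fastforce
      have "(D p0 p1 ^^ (1 + B)) x \<in> Fil R (Suc l) p0 p1" if x: "x \<in> Fil R l p0 p1" for x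
      proof -
        have w: "mul R p1 p0 p1 v x \<in> Fil R l p1 p1"
          using Fil_mul[OF o(2) o(1) o(2), of v 0 x l] Fil0[OF o(2) o(1)] uv x by simp
        have u0: "u \<in> Fil R 0 p0 p1" using Fil0[OF o] uv by simp
        have hu: "(D p0 p1 ^^ 1) u \<in> Fil R (Suc 0) p0 p1" using n0 u0 by blast
        have "(D p0 p1 ^^ (1 + B)) (mul R p0 p1 p1 u (mul R p1 p0 p1 v x)) \<in> Fil R (Suc (0 + l)) p0 p1"
          by (rule prod_nil[OF d F o(1) o(2) o(2) u0 w hu B[rule_format, OF w]])
        then show ?thesis using iso_fact[OF o uv Fil_hom[OF o x]] by simp
      qed
      then show ?thesis unfolding nilp_def by blast
    qed
  qed
qed

lemma good_of_cond:
  assumes c: "cond_i_iii R D"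
  shows "good D"
proof -
  note kl = condD(2)[OF c] and F = condD(3)[OF c]
  have "\<exists>T. \<forall>x\<in>Hom R p0 p1. (D p0 p1 ^^ T) x \<in> Fil R n p0 p1" if o: "p0 \<in> Ob R" "p1 \<in> Ob R" for p0 p1 n
  proof (induction n)
    case 0 then show ?case using Fil0[OF o] pow_hom[OF kl o] by auto
  next
    case (Suc n)
    then obtain T where T: "\<forall>x\<in>Hom R p0 p1. (D p0 p1 ^^ T) x \<in> Fil R n p0 p1" by blast
    obtain N where N: "\<forall>x\<in>Fil R n p0 p1. (D p0 p1 ^^ N) x \<in> Fil R (Suc n) p0 p1"
      using nilp_all[OF c o] unfolding nilp_def by blast
    have "(D p0 p1 ^^ (N + T)) x \<in> Fil R (Suc n) p0 p1" if "x \<in> Hom R p0 p1" for x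
      using T N that by (simp add: funpow_add)
    then show ?case by blast
  qed
  then show ?thesis unfolding good_def using kl F by blast
qed

end

context sacl
begin

lemma der_idm: assumes d: "is_derivation R D" and p: "p \<in> Ob R" shows "D p p (idm R p) = zer R p p"
proof -
  have kl: "is_klinear_fam R D" using d unfolding is_derivation_def by simp
  interpret M: kmod "HG R p p" "smult R p p" by (rule kmodHG[OF p p])
  have i: "idm R p \<in> Hom R p p" using p by simp
  have Di: "D p p (idm R p) \<in> Hom R p p" using klinD(1)[OF kl p p i] .
  have "D p p (idm R p) = D p p (mul R p p p (idm R p) (idm R p))" using mul_idm[OF p p i] by simp
  also have "\<dots> = sac.add R p p (D p p (idm R p)) (D p p (idm R p))"
    using derD[OF d p p p i i] mul_idm[OF p p Di] by simp
  finally have "D p p (idm R p) = D p p (idm R p) \<oplus>\<^bsub>HG R p p\<^esub> D p p (idm R p)" by simp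
  then show ?thesis using M.add.l_cancel_one'[of "D p p (idm R p)" "D p p (idm R p)"] Di by simp
qed

lemma Ex_idm: assumes g: "good D" and d: "is_derivation R D" and p: "p \<in> Ob R"
  shows "der_exp R D p p (idm R p) = idm R p"
proof (rule Ex_eqI[OF g p p])
  note kl = goodD(1)[OF g p p]
  show "idm R p \<in> Hom R p p" "idm R p \<in> Hom R p p" using p by simp_all
  have pz: "(D p p ^^ Suc k) (idm R p) = zer R p p" for k
    by (induction k) (simp_all add: der_idm[OF d p] klin_zer[OF kl p p])
  have ps: "exp_psum R D p p (idm R p) (Suc N) = idm R p" for N
  proof (induction N)
    case 0 then show ?case using inv_nat_1 HGlaws(7)[OF p p] HGlaws(4)[OF p p] p by simp
  next
    case (Suc N) then show ?case using pz[of N] sm_zer[OF p p] HGlaws(8)[OF p p] p by simp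
  qed
  fix n
  show "\<exists>T. \<forall>N\<ge>T. hsub R p p (idm R p) (exp_psum R D p p (idm R p) N) \<in> Fil R n p p"
  proof (intro exI allI impI)
    fix N :: nat assume "1 \<le> N"
    then obtain N' where "N = Suc N'" by (cases N) auto
    then show "hsub R p p (idm R p) (exp_psum R D p p (idm R p) N) \<in> Fil R n p p"
      using ps cg_refl[OF p p] p by simp
  qed
qed

lemma pow_finsum:
  assumes kl: "is_klinear_fam R D" and o: "p0 \<in> Ob R" "p1 \<in> Ob R" and f: "\<And>i. f i \<in> Hom R p0 p1" and fin: "finite A"
  shows "(D p0 p1 ^^ a) (finsum (HG R p0 p1) f A) = finsum (HG R p0 p1) (\<lambda>i. (D p0 p1 ^^ a) (f i)) A"
proof -
  interpret M: kmod "HG R p0 p1" "smult R p0 p1" by (rule kmodHG[OF o])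
  show ?thesis
    by (rule hom_finsum[OF M.abelian_group_axioms M.abelian_group_axioms])
       (use pow_add[OF kl o] pow_hom[OF kl o] pow_zer[OF kl o] f fin in auto)
qed

lemma comm_pow:
  assumes kl: "is_klinear_fam R D" and kl': "is_klinear_fam R D'" and c: "der_commute R D D'"
    and o: "p0 \<in> Ob R" "p1 \<in> Ob R"
  shows "u \<in> Hom R p0 p1 \<Longrightarrow> D' p0 p1 ((D p0 p1 ^^ a) u) = (D p0 p1 ^^ a) (D' p0 p1 u)"
proof (induction a arbitrary: u)
  case 0 then show ?case by simp
next
  case (Suc a)
  have "D' p0 p1 ((D p0 p1 ^^ Suc a) u) = D' p0 p1 ((D p0 p1 ^^ a) (D p0 p1 u))" by (simp add: funpow_Suc_right del: funpow.simps)
  also have "\<dots> = (D p0 p1 ^^ a) (D' p0 p1 (D p0 p1 u))" using Suc klinD(1)[OF kl o] by simp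
  also have "\<dots> = (D p0 p1 ^^ a) (D p0 p1 (D' p0 p1 u))" using c Suc o unfolding der_commute_def by simp
  also have "\<dots> = (D p0 p1 ^^ Suc a) (D' p0 p1 u)" by (simp add: funpow_Suc_right del: funpow.simps)
  finally show ?case .
qed

lemma add4: assumes o: "p0 \<in> Ob R" "p1 \<in> Ob R" and h: "a \<in> Hom R p0 p1" "b \<in> Hom R p0 p1" "c \<in> Hom R p0 p1" "d \<in> Hom R p0 p1"
  shows "sac.add R p0 p1 (sac.add R p0 p1 a b) (sac.add R p0 p1 c d) = sac.add R p0 p1 (sac.add R p0 p1 a c) (sac.add R p0 p1 b d)"
proof -
  note A = HGlaws(6)[OF o] and C = HGlaws(5)[OF o]
  have "sac.add R p0 p1 (sac.add R p0 p1 a b) (sac.add R p0 p1 c d) = sac.add R p0 p1 a (sac.add R p0 p1 b (sac.add R p0 p1 c d))"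
    using A h o by simp
  also have "\<dots> = sac.add R p0 p1 a (sac.add R p0 p1 (sac.add R p0 p1 b c) d)" using A h o by simp
  also have "\<dots> = sac.add R p0 p1 a (sac.add R p0 p1 (sac.add R p0 p1 c b) d)" using C[of b c] h o by simp
  also have "\<dots> = sac.add R p0 p1 a (sac.add R p0 p1 c (sac.add R p0 p1 b d))" using A h o by simp
  also have "\<dots> = sac.add R p0 p1 (sac.add R p0 p1 a c) (sac.add R p0 p1 b d)" using A h o by simp
  finally show ?thesis .
qed

lemma dsum_klin: assumes kl: "is_klinear_fam R D" and kl': "is_klinear_fam R D'"
  shows "is_klinear_fam R (der_add R D D')"
  unfolding is_klinear_fam_def der_add_def
  using klinD[OF kl] klinD[OF kl'] add4 HGlaws(1) by simp

lemma dsum_binom: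
  assumes kl: "is_klinear_fam R D" and kl': "is_klinear_fam R D'" and c: "der_commute R D D'"
    and o: "p0 \<in> Ob R" "p1 \<in> Ob R" and x: "x \<in> Hom R p0 p1"
  shows "(der_add R D D' p0 p1 ^^ n) x = finsum (HG R p0 p1) (\<lambda>k. smult R p0 p1 (of_nat (n choose k)) ((D p0 p1 ^^ k) ((D' p0 p1 ^^ (n - k)) x))) {..n}"
proof -
  interpret M: kmod "HG R p0 p1" "smult R p0 p1" by (rule kmodHG[OF o])
  note kls = dsum_klin[OF kl kl']
  let ?t = "\<lambda>a b. (D p0 p1 ^^ a) ((D' p0 p1 ^^ b) x)"
  have tc: "?t a b \<in> Hom R p0 p1" for a b using pow_hom[OF kl o] pow_hom[OF kl' o] x by simp
  have "(der_add R D D' p0 p1 ^^ n) (?t 0 0) = finsum (HG R p0 p1) (\<lambda>k. smult R p0 p1 (of_nat (n choose k)) (?t k (n - k))) {..n}"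
  proof (rule M.binom)
    show "\<And>a b. der_add R D D' p0 p1 (?t a b) = ?t (Suc a) b \<oplus>\<^bsub>HG R p0 p1\<^esub> ?t a (Suc b)"
      unfolding der_add_def using comm_pow[OF kl kl' c o] pow_hom[OF kl' o] x by simp
  qed (use klinD[OF kls o] tc in simp_all)
  then show ?thesis by simp
qed

lemma dsum_cond:
  assumes c1: "cond_i_iii R D" and c2: "cond_i_iii R D'" and c: "der_commute R D D'"
  shows "cond_i_iii R (der_add R D D')"
proof -
  note kl = condD(2)[OF c1] and kl' = condD(2)[OF c2]
  note kls = dsum_klin[OF kl kl']
  have der: "is_derivation R (der_add R D D')"
    unfolding is_derivation_def
  proof (intro conjI kls ballI)
    fix p0 p1 p2 u v assume o: "p0 \<in> Ob R" "p1 \<in> Ob R" "p2 \<in> Ob R" and u: "u \<in> Hom R p0 p1" and v: "v \<in> Hom R p1 p2"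
    show "der_add R D D' p0 p2 (mul R p0 p1 p2 u v) = sac.add R p0 p2 (mul R p0 p1 p2 (der_add R D D' p0 p1 u) v)
           (mul R p0 p1 p2 u (der_add R D D' p1 p2 v))"
      unfolding der_add_def using derD[OF condD(1)[OF c1] o u v] derD[OF condD(1)[OF c2] o u v]
        klinD(1)[OF kl] klinD(1)[OF kl'] o u v mul_add_l mul_add_r add4 by simp
  qed
  have F: "der_add R D D' p0 p1 u \<in> Fil R l p0 p1" if "p0 \<in> Ob R" "p1 \<in> Ob R" "u \<in> Fil R l p0 p1" for p0 p1 l u
    unfolding der_add_def using condD(3)[OF c1 that] condD(3)[OF c2 that] that by simp
  have ii: "\<exists>\<nu>::nat. \<nu> > 0 \<and> (\<forall>u\<in>Fil R 1 p0 p1. (der_add R D D' p0 p1 ^^ \<nu>) u \<in> Fil R 2 p0 p1)"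
    if o: "p0 \<in> Ob R" "p1 \<in> Ob R" for p0 p1
  proof -
    interpret M: kmod "HG R p0 p1" "smult R p0 p1" by (rule kmodHG[OF o])
    obtain a where a: "a > 0" "\<forall>u\<in>Fil R 1 p0 p1. (D p0 p1 ^^ a) u \<in> Fil R 2 p0 p1" using condD(4)[OF c1 o] by blast
    obtain b where b: "b > 0" "\<forall>u\<in>Fil R 1 p0 p1. (D' p0 p1 ^^ b) u \<in> Fil R 2 p0 p1" using condD(4)[OF c2 o] by blast
    have PF: "\<And>k l x. x \<in> Fil R l p0 p1 \<Longrightarrow> (D p0 p1 ^^ k) x \<in> Fil R l p0 p1"
      using pow_Fil[of _ p0 p1 D] condD(3)[OF c1 o] by blast
    have PF': "\<And>k l x. x \<in> Fil R l p0 p1 \<Longrightarrow> (D' p0 p1 ^^ k) x \<in> Fil R l p0 p1"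
      using pow_Fil[of _ p0 p1 D'] condD(3)[OF c2 o] by blast
    have "(der_add R D D' p0 p1 ^^ (a + b)) u \<in> Fil R 2 p0 p1" if u: "u \<in> Fil R 1 p0 p1" for u
    proof -
      have uh: "u \<in> Hom R p0 p1" using Fil_hom[OF o u] .
      have "(D p0 p1 ^^ k) ((D' p0 p1 ^^ (a + b - k)) u) \<in> Fil R 2 p0 p1" for k
      proof (cases "a \<le> k")
        case True
        have "(D p0 p1 ^^ k) ((D' p0 p1 ^^ (a + b - k)) u) = (D p0 p1 ^^ (k - a)) ((D p0 p1 ^^ a) ((D' p0 p1 ^^ (a + b - k)) u))"
          using True by (metis funpow_add le_add_diff_inverse2 o_apply)
        then show ?thesis using PF a(2) PF'[OF u] by simp
      next
        case False
        then have "b \<le> a + b - k" by simp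
        then have "(D' p0 p1 ^^ (a + b - k)) u = (D' p0 p1 ^^ (a + b - k - b)) ((D' p0 p1 ^^ b) u)"
          by (metis funpow_add le_add_diff_inverse2 o_apply)
        then show ?thesis using PF PF' b(2) u by simp
      qed
      then show ?thesis unfolding dsum_binom[OF kl kl' c o uh]
        by (intro M.submod_finsum[OF Fil_submod[OF o]]) (use o in auto)
    qed
    then show ?thesis using a b by (intro exI[of _ "a + b"]) auto
  qed
  have iii: "der_add R D D' p0 p1 u \<in> Fil R 1 p0 p1" if "p0 \<in> Ob R" "p1 \<in> Ob R" "u \<in> Hom R p0 p1" for p0 p1 u
    unfolding der_add_def using condD(5)[OF c1 that] condD(5)[OF c2 that] that by simp
  show ?thesis unfolding cond_i_iii_def in_FDer_def using der F ii iii by simp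
qed

lemma Ex_dsum:
  assumes c1: "cond_i_iii R D" and c2: "cond_i_iii R D'" and c: "der_commute R D D'"
    and o: "p0 \<in> Ob R" "p1 \<in> Ob R" and u: "u \<in> Hom R p0 p1"
  shows "der_exp R (der_add R D D') p0 p1 u = der_exp R D p0 p1 (der_exp R D' p0 p1 u)"
proof -
  note kl = condD(2)[OF c1] and kl' = condD(2)[OF c2]
  note g = good_of_cond[OF c1] and g' = good_of_cond[OF c2]
  note gs = good_of_cond[OF dsum_cond[OF c1 c2 c]]
  note kls = dsum_klin[OF kl kl']
  interpret M: kmod "HG R p0 p1" "smult R p0 p1" by (rule kmodHG[OF o])
  have Ex'u: "der_exp R D' p0 p1 u \<in> Hom R p0 p1" using Ex_hom[OF g' o u] .
  have x: "der_exp R D p0 p1 (der_exp R D' p0 p1 u) \<in> Hom R p0 p1" using Ex_hom[OF g o Ex'u] .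
  show ?thesis
  proof (rule Ex_eqI[OF gs o u x])
    fix n
    obtain T1 where T1: "\<forall>k\<ge>T1. \<forall>x\<in>Hom R p0 p1. (D p0 p1 ^^ k) x \<in> Fil R n p0 p1" using goodT[OF g o] by blast
    obtain T2 where T2: "\<forall>k\<ge>T2. \<forall>x\<in>Hom R p0 p1. (D' p0 p1 ^^ k) x \<in> Fil R n p0 p1" using goodT[OF g' o] by blast
    obtain A1 where A1: "\<forall>N\<ge>A1. \<forall>u\<in>Hom R p0 p1. hsub R p0 p1 (der_exp R D p0 p1 u) (exp_psum R D p0 p1 u N) \<in> Fil R n p0 p1"
      using Ex_approx[OF g o] by blast
    obtain A2 where A2: "\<forall>N\<ge>A2. \<forall>u\<in>Hom R p0 p1. hsub R p0 p1 (der_exp R D' p0 p1 u) (exp_psum R D' p0 p1 u N) \<in> Fil R n p0 p1"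
      using Ex_approx[OF g' o] by blast
    let ?T = "max T1 T2"
    let ?t = "\<lambda>a b. (D p0 p1 ^^ a) ((D' p0 p1 ^^ b) u)"
    have tc: "?t a b \<in> Hom R p0 p1" for a b using pow_hom[OF kl o] pow_hom[OF kl' o] u by simp
    show "\<exists>T. \<forall>N\<ge>T. hsub R p0 p1 (der_exp R D p0 p1 (der_exp R D' p0 p1 u)) (exp_psum R (der_add R D D') p0 p1 u N) \<in> Fil R n p0 p1"
    proof (intro exI allI impI)
      fix N assume N: "max (max A1 A2) (2 * ?T) \<le> N"
      let ?p' = "exp_psum R D' p0 p1 u N"
      have p'h: "?p' \<in> Hom R p0 p1" using psum_hom[OF kl' o u] .
      have c1: "hsub R p0 p1 (der_exp R D p0 p1 (der_exp R D' p0 p1 u)) (exp_psum R D p0 p1 (der_exp R D' p0 p1 u) N) \<in> Fil R n p0 p1"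
        using A1 N Ex'u by simp
      have c2: "hsub R p0 p1 (exp_psum R D p0 p1 (der_exp R D' p0 p1 u) N) (exp_psum R D p0 p1 ?p' N) \<in> Fil R n p0 p1"
        by (rule psum_cg[OF g o Ex'u p'h]) (use A2 N u in simp)
      have e1: "exp_psum R D p0 p1 ?p' N = finsum (HG R p0 p1) (\<lambda>a. finsum (HG R p0 p1) (\<lambda>b.
           smult R p0 p1 (inv_nat (fact a) * inv_nat (fact b)) (?t a b)) {..<N}) {..<N}"
        unfolding psum_finsum[OF kl o p'h]
      proof (rule M.finsum_cong')
        fix a
        show "smult R p0 p1 (inv_nat (fact a)) ((D p0 p1 ^^ a) ?p') = finsum (HG R p0 p1) (\<lambda>b.
           smult R p0 p1 (inv_nat (fact a) * inv_nat (fact b)) (?t a b)) {..<N}"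
          unfolding psum_finsum[OF kl' o u]
          apply (subst pow_finsum[OF kl o])
            apply (use pow_hom[OF kl' o u] o in simp_all)[2]
          apply (subst M.sm_finsum)
            apply (use pow_hom[OF kl o] pow_hom[OF kl' o u] o in auto)[2]
          apply (rule M.finsum_cong')
          using pow_hom[OF kl o] pow_hom[OF kl' o u] o
          by (auto simp: pow_sm[OF kl o] HGlaws(3)[OF o] Pi_def)
      qed (use tc o in \<open>auto intro!: finsum_hom[OF o]\<close>)
      have e2: "exp_psum R (der_add R D D') p0 p1 u N =
         finsum (HG R p0 p1) (\<lambda>m. smult R p0 p1 (inv_nat (fact m)) ((der_add R D D' p0 p1 ^^ m) (?t 0 0))) {..<N}"
        using psum_finsum[OF kls o u] by simp
      have c3: "hsub R p0 p1 (finsum (HG R p0 p1) (\<lambda>a. finsum (HG R p0 p1) (\<lambda>b.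
           smult R p0 p1 (inv_nat (fact a) * inv_nat (fact b)) (?t a b)) {..<N}) {..<N})
         (finsum (HG R p0 p1) (\<lambda>m. smult R p0 p1 (inv_nat (fact m)) ((der_add R D D' p0 p1 ^^ m) (?t 0 0))) {..<N}) \<in> Fil R n p0 p1"
      proof (rule cprod[OF o, where T = ?T])
        show "\<And>a b. der_add R D D' p0 p1 (?t a b) = sac.add R p0 p1 (?t (Suc a) b) (?t a (Suc b))"
          unfolding der_add_def using comm_pow[OF kl kl' c o] pow_hom[OF kl' o] u by simp
        show "2 * ?T \<le> N" using N by simp
        fix a b assume ab: "?T \<le> a \<or> ?T \<le> b"
        show "?t a b \<in> Fil R n p0 p1"
        proof (cases "T1 \<le> a")
          case True then show ?thesis using T1 pow_hom[OF kl' o u] by simp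
        next
          case False
          then have "T2 \<le> b" using ab by simp
          then have "(D' p0 p1 ^^ b) u \<in> Fil R n p0 p1" using T2 u by simp
          then show ?thesis using good_powFil[OF g o] by simp
        qed
      qed (use klinD[OF kls o] tc in simp_all)
      have c23: "hsub R p0 p1 (exp_psum R D p0 p1 ?p' N) (exp_psum R (der_add R D D') p0 p1 u N) \<in> Fil R n p0 p1"
        using c3 e1 e2 by simp
      show "hsub R p0 p1 (der_exp R D p0 p1 (der_exp R D' p0 p1 u)) (exp_psum R (der_add R D D') p0 p1 u N) \<in> Fil R n p0 p1"
        by (rule cg_trans[OF o x _ _ c1 cg_trans[OF o _ _ _ c2 c23]])
           (use psum_hom[OF kl o Ex'u] psum_hom[OF kl o p'h] psum_hom[OF kls o u] in auto)
    qed
  qed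
qed

end

context sacl
begin

definition scD :: "'k \<Rightarrow> ('o, 'm) famap \<Rightarrow> ('o, 'm) famap" where
  "scD c D = (\<lambda>p0 p1 u. smult R p0 p1 c (D p0 p1 u))"

lemma scD_klin: "is_klinear_fam R D \<Longrightarrow> is_klinear_fam R (scD c D)"
  unfolding is_klinear_fam_def scD_def using HGlaws(1) sm_swap by simp

lemma scD_pow: assumes kl: "is_klinear_fam R D" and o: "p0 \<in> Ob R" "p1 \<in> Ob R" and u: "u \<in> Hom R p0 p1"
  shows "(scD c D p0 p1 ^^ k) u = smult R p0 p1 (c ^ k) ((D p0 p1 ^^ k) u)"
proof (induction k)
  case 0 then show ?case using HGlaws(4)[OF o u] by simp
next
  case (Suc k)
  then show ?case unfolding scD_def using klinD(3)[OF kl o] pow_hom[OF kl o u] klinD(1)[OF kl o]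
      HGlaws(3)[OF o, symmetric] o by simp
qed

lemma scD_cond: assumes c: "cond_i_iii R D" shows "cond_i_iii R (scD a D)"
proof -
  note kl = condD(2)[OF c]
  have der: "is_derivation R (scD a D)"
    unfolding is_derivation_def
  proof (intro conjI scD_klin[OF kl] ballI)
    fix p0 p1 p2 u v assume o: "p0 \<in> Ob R" "p1 \<in> Ob R" "p2 \<in> Ob R" and u: "u \<in> Hom R p0 p1" and v: "v \<in> Hom R p1 p2"
    show "scD a D p0 p2 (mul R p0 p1 p2 u v) = sac.add R p0 p2 (mul R p0 p1 p2 (scD a D p0 p1 u) v) (mul R p0 p1 p2 u (scD a D p1 p2 v))"
      unfolding scD_def using derD[OF condD(1)[OF c] o u v] klinD(1)[OF kl] o u v mul_sm_l mul_sm_r HGlaws(1) by simp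
  qed
  have F: "scD a D p0 p1 u \<in> Fil R l p0 p1" if "p0 \<in> Ob R" "p1 \<in> Ob R" "u \<in> Fil R l p0 p1" for p0 p1 l u
    unfolding scD_def using condD(3)[OF c that] that by simp
  have ii: "\<exists>\<nu>::nat. \<nu> > 0 \<and> (\<forall>u\<in>Fil R 1 p0 p1. (scD a D p0 p1 ^^ \<nu>) u \<in> Fil R 2 p0 p1)"
    if o: "p0 \<in> Ob R" "p1 \<in> Ob R" for p0 p1
  proof -
    obtain \<nu> where nu: "\<nu> > 0" "\<forall>u\<in>Fil R 1 p0 p1. (D p0 p1 ^^ \<nu>) u \<in> Fil R 2 p0 p1" using condD(4)[OF c o] by blast
    have "(scD a D p0 p1 ^^ \<nu>) u \<in> Fil R 2 p0 p1" if u: "u \<in> Fil R 1 p0 p1" for u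
      using scD_pow[OF kl o Fil_hom[OF o u]] nu u o by simp
    then show ?thesis using nu by blast
  qed
  have iii: "scD a D p0 p1 u \<in> Fil R 1 p0 p1" if "p0 \<in> Ob R" "p1 \<in> Ob R" "u \<in> Hom R p0 p1" for p0 p1 u
    unfolding scD_def using condD(5)[OF c that] that by simp
  show ?thesis unfolding cond_i_iii_def in_FDer_def using der F ii iii by simp
qed

lemma scD_comm: assumes kl: "is_klinear_fam R D" shows "der_commute R (scD a D) (scD b D)"
  unfolding der_commute_def scD_def using klinD[OF kl] sm_swap by simp

lemma Ex_cong:
  assumes kl1: "is_klinear_fam R D1" and kl2: "is_klinear_fam R D2"
    and e: "\<And>p0 p1 u. p0 \<in> Ob R \<Longrightarrow> p1 \<in> Ob R \<Longrightarrow> u \<in> Hom R p0 p1 \<Longrightarrow> D1 p0 p1 u = D2 p0 p1 u"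
    and o: "p0 \<in> Ob R" "p1 \<in> Ob R" and u: "u \<in> Hom R p0 p1"
  shows "der_exp R D1 p0 p1 u = der_exp R D2 p0 p1 u"
proof -
  have pw: "(D1 p0 p1 ^^ k) u = (D2 p0 p1 ^^ k) u" for k
    by (induction k) (simp_all add: e[OF o] pow_hom[OF kl2 o u])
  have "exp_psum R D1 p0 p1 u N = exp_psum R D2 p0 p1 u N" for N
    by (induction N) (simp_all add: pw)
  then have "exp_psum R D1 p0 p1 u = exp_psum R D2 p0 p1 u" by (rule ext)
  then show ?thesis unfolding der_exp_def by simp
qed

lemma Ex_scsc:
  assumes c: "cond_i_iii R D" and o: "p0 \<in> Ob R" "p1 \<in> Ob R" and u: "u \<in> Hom R p0 p1"
  shows "der_exp R (scD (a + b) D) p0 p1 u = der_exp R (scD a D) p0 p1 (der_exp R (scD b D) p0 p1 u)"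
proof -
  note kl = condD(2)[OF c]
  have "der_exp R (scD (a + b) D) p0 p1 u = der_exp R (der_add R (scD a D) (scD b D)) p0 p1 u"
    by (rule Ex_cong[OF scD_klin[OF kl] dsum_klin[OF scD_klin[OF kl] scD_klin[OF kl]] _ o u])
       (simp add: der_add_def scD_def HGlaws(2) klinD(1)[OF kl])
  also have "\<dots> = der_exp R (scD a D) p0 p1 (der_exp R (scD b D) p0 p1 u)"
    by (rule Ex_dsum[OF scD_cond[OF c] scD_cond[OF c] scD_comm[OF kl] o u])
  finally show ?thesis .
qed

lemma Ex_sc1:
  assumes c: "cond_i_iii R D" and o: "p0 \<in> Ob R" "p1 \<in> Ob R" and u: "u \<in> Hom R p0 p1"
  shows "der_exp R (scD 1 D) p0 p1 u = der_exp R D p0 p1 u"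
  by (rule Ex_cong[OF scD_klin[OF condD(2)[OF c]] condD(2)[OF c] _ o u])
     (simp add: scD_def HGlaws(4) klinD(1)[OF condD(2)[OF c]])

lemma Ex_sc0:
  assumes c: "cond_i_iii R D" and o: "p0 \<in> Ob R" "p1 \<in> Ob R" and u: "u \<in> Hom R p0 p1"
  shows "der_exp R (scD 0 D) p0 p1 u = u"
proof (rule Ex_eqI[OF good_of_cond[OF scD_cond[OF c]] o u u])
  note kl = condD(2)[OF c]
  have pz: "(scD 0 D p0 p1 ^^ Suc k) u = zer R p0 p1" for k
    using scD_pow[OF kl o u, where c = 0 and k = "Suc k"] sm0_zer[OF o] pow_hom[OF kl o u] klinD(1)[OF kl o] by simp
  have ps: "exp_psum R (scD 0 D) p0 p1 u (Suc N) = u" for N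
  proof (induction N)
    case 0 then show ?case using inv_nat_1 HGlaws(7)[OF o] HGlaws(4)[OF o] o u by simp
  next
    case (Suc N) then show ?case using pz[of N] sm_zer[OF o] HGlaws(8)[OF o] o u by simp
  qed
  fix n
  show "\<exists>T. \<forall>N\<ge>T. hsub R p0 p1 u (exp_psum R (scD 0 D) p0 p1 u N) \<in> Fil R n p0 p1"
  proof (intro exI allI impI)
    fix N :: nat assume "1 \<le> N"
    then obtain N' where "N = Suc N'" by (cases N) auto
    then show "hsub R p0 p1 u (exp_psum R (scD 0 D) p0 p1 u N) \<in> Fil R n p0 p1"
      using ps cg_refl[OF o u] by simp
  qed
qed

lemma Ex_inv:
  assumes c: "cond_i_iii R D" and o: "p0 \<in> Ob R" "p1 \<in> Ob R" and u: "u \<in> Hom R p0 p1"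
  shows "der_exp R (scD (-1) D) p0 p1 (der_exp R D p0 p1 u) = u"
    "der_exp R D p0 p1 (der_exp R (scD (-1) D) p0 p1 u) = u"
proof -
  note g = good_of_cond[OF c] and gm = good_of_cond[OF scD_cond[OF c]]
  have "u = der_exp R (scD (-1 + 1) D) p0 p1 u" using Ex_sc0[OF c o u] by simp
  also have "\<dots> = der_exp R (scD (-1) D) p0 p1 (der_exp R (scD 1 D) p0 p1 u)" by (rule Ex_scsc[OF c o u])
  finally show "der_exp R (scD (-1) D) p0 p1 (der_exp R D p0 p1 u) = u" using Ex_sc1[OF c o u] by simp
  have "u = der_exp R (scD (1 + -1) D) p0 p1 u" using Ex_sc0[OF c o u] by simp
  also have "\<dots> = der_exp R (scD 1 D) p0 p1 (der_exp R (scD (-1) D) p0 p1 u)" by (rule Ex_scsc[OF c o u])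
  finally show "der_exp R D p0 p1 (der_exp R (scD (-1) D) p0 p1 u) = u"
    using Ex_sc1[OF c o Ex_hom[OF gm[of "-1"] o u]] by simp
qed

lemma Ex_Aut: assumes c: "cond_i_iii R D" shows "is_Aut R (der_exp R D)"
proof -
  note g = good_of_cond[OF c] and gm = good_of_cond[OF scD_cond[OF c, of "-1"]]
  have kl: "is_klinear_fam R (der_exp R D)"
    unfolding is_klinear_fam_def using Ex_hom[OF g] Ex_add[OF g] Ex_sm[OF g] by simp
  have bij: "bij_betw (der_exp R D p0 p1) (Hom R p0 p1) (Hom R p0 p1)" if o: "p0 \<in> Ob R" "p1 \<in> Ob R" for p0 p1
    by (rule bij_betwI[where g = "der_exp R (scD (-1) D) p0 p1"])
       (use Ex_hom[OF g o] Ex_hom[OF gm o] Ex_inv[OF c o] in auto)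
  show ?thesis unfolding is_Aut_def
    using kl bij Ex_mul[OF g condD(1)[OF c]] Ex_idm[OF g condD(1)[OF c]] by simp
qed

lemma Ex_approx2:
  assumes g: "good D" and o: "p0 \<in> Ob R" "p1 \<in> Ob R"
    and T: "\<forall>k\<ge>T. \<forall>x\<in>Hom R p0 p1. (D p0 p1 ^^ k) x \<in> Fil R n p0 p1"
    and N: "N \<ge> T" and u: "u \<in> Hom R p0 p1"
  shows "hsub R p0 p1 (der_exp R D p0 p1 u) (exp_psum R D p0 p1 u N) \<in> Fil R n p0 p1"
proof -
  note kl = goodD(1)[OF g o]
  let ?s = "exp_psum R D p0 p1 u"
  note E = Ex_conv[OF g o u]
  obtain T1 where T1: "\<forall>M\<ge>T1. hsub R p0 p1 (?s M) (der_exp R D p0 p1 u) \<in> Fil R n p0 p1"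
    using E unfolding fil_converges_to_def by blast
  let ?M = "max T1 N"
  have 1: "hsub R p0 p1 (?s ?M) (der_exp R D p0 p1 u) \<in> Fil R n p0 p1" using T1 by simp
  have 2: "hsub R p0 p1 (?s ?M) (?s T) \<in> Fil R n p0 p1" using psum_cauchy[OF kl o u, of T n ?M] T u N by simp
  have 3: "hsub R p0 p1 (?s N) (?s T) \<in> Fil R n p0 p1" using psum_cauchy[OF kl o u, of T n N] T u N by simp
  have sh: "?s M \<in> Hom R p0 p1" for M using psum_hom[OF kl o u] .
  have 4: "hsub R p0 p1 (?s ?M) (?s N) \<in> Fil R n p0 p1"
    by (rule cg_trans[OF o sh sh sh 2 cg_sym[OF o sh sh 3]])
  show ?thesis by (rule cg_trans[OF o E[THEN conjunct1] sh sh cg_sym[OF o sh E[THEN conjunct1] 1] 4])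
qed

lemma Ex_pow:
  assumes c: "cond_i_iii R D" and o: "p0 \<in> Ob R" "p1 \<in> Ob R" and u: "u \<in> Hom R p0 p1"
  shows "der_exp R (scD (of_nat m) D) p0 p1 u = (der_exp R D p0 p1 ^^ m) u"
proof (induction m)
  case 0 then show ?case using Ex_sc0[OF c o u] by simp
next
  case (Suc m)
  note g = good_of_cond[OF c]
  have h: "(der_exp R D p0 p1 ^^ m) u \<in> Hom R p0 p1" by (induction m) (simp_all add: u Ex_hom[OF g o])
  have "der_exp R (scD (of_nat (Suc m)) D) p0 p1 u = der_exp R (scD (1 + of_nat m) D) p0 p1 u" by simp
  also have "\<dots> = der_exp R (scD 1 D) p0 p1 (der_exp R (scD (of_nat m) D) p0 p1 u)" by (rule Ex_scsc[OF c o u])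
  also have "\<dots> = der_exp R D p0 p1 ((der_exp R D p0 p1 ^^ m) u)" using Suc Ex_sc1[OF c o h] by simp
  finally show ?case by simp
qed

lemma part3:
  assumes c: "cond_i_iii R D" and c': "cond_i_iii R D'"
    and e: "\<forall>p0\<in>Ob R. \<forall>p1\<in>Ob R. \<forall>u\<in>Hom R p0 p1. der_exp R D p0 p1 u = der_exp R D' p0 p1 u"
    and o: "p0 \<in> Ob R" "p1 \<in> Ob R" and u: "u \<in> Hom R p0 p1"
  shows "D p0 p1 u = D' p0 p1 u"
proof -
  interpret M: kmod "HG R p0 p1" "smult R p0 p1" by (rule kmodHG[OF o])
  note kl = condD(2)[OF c] and kl' = condD(2)[OF c']
  note g = good_of_cond[OF c] and g' = good_of_cond[OF c']
  have pw: "(der_exp R D p0 p1 ^^ m) u = (der_exp R D' p0 p1 ^^ m) u \<and> (der_exp R D p0 p1 ^^ m) u \<in> Hom R p0 p1" for m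
    by (induction m) (use u e o Ex_hom[OF g o] in auto)
  have em: "der_exp R (scD (of_nat m) D) p0 p1 u = der_exp R (scD (of_nat m) D') p0 p1 u" for m
    using Ex_pow[OF c o u, of m] Ex_pow[OF c' o u, of m] pw by simp
  show ?thesis
  proof (rule eq_by_cg[OF o klinD(1)[OF kl o u] klinD(1)[OF kl' o u]])
    fix n
    obtain T1 where T1: "\<forall>k\<ge>T1. \<forall>x\<in>Hom R p0 p1. (D p0 p1 ^^ k) x \<in> Fil R n p0 p1" using goodT[OF g o] by blast
    obtain T2 where T2: "\<forall>k\<ge>T2. \<forall>x\<in>Hom R p0 p1. (D' p0 p1 ^^ k) x \<in> Fil R n p0 p1" using goodT[OF g' o] by blast
    define N where "N = max (max T1 T2) 2"
    let ?x = "\<lambda>k. smult R p0 p1 (inv_nat (fact k)) ((D p0 p1 ^^ k) u)"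
    let ?y = "\<lambda>k. smult R p0 p1 (inv_nat (fact k)) ((D' p0 p1 ^^ k) u)"
    let ?b = "\<lambda>k. hsub R p0 p1 (?x k) (?y k)"
    have xh: "?x k \<in> Hom R p0 p1" "?y k \<in> Hom R p0 p1" "?b k \<in> Hom R p0 p1" for k
      using pow_hom[OF kl o u] pow_hom[OF kl' o u] o by simp_all
    have P: "finsum (HG R p0 p1) (\<lambda>k. smult R p0 p1 ((of_nat m) ^ k) (?b k)) {..<N} \<in> Fil R n p0 p1" for m :: nat
    proof -
      let ?c = "of_nat m :: 'k"
      have TT1: "\<forall>k\<ge>T1. \<forall>x\<in>Hom R p0 p1. (scD ?c D p0 p1 ^^ k) x \<in> Fil R n p0 p1"
        using T1 scD_pow[OF kl o] o by simp
      have TT2: "\<forall>k\<ge>T2. \<forall>x\<in>Hom R p0 p1. (scD ?c D' p0 p1 ^^ k) x \<in> Fil R n p0 p1"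
        using T2 scD_pow[OF kl' o] o by simp
      have a1: "hsub R p0 p1 (der_exp R (scD ?c D) p0 p1 u) (exp_psum R (scD ?c D) p0 p1 u N) \<in> Fil R n p0 p1"
        by (rule Ex_approx2[OF good_of_cond[OF scD_cond[OF c]] o TT1 _ u]) (simp add: N_def)
      have a2: "hsub R p0 p1 (der_exp R (scD ?c D') p0 p1 u) (exp_psum R (scD ?c D') p0 p1 u N) \<in> Fil R n p0 p1"
        by (rule Ex_approx2[OF good_of_cond[OF scD_cond[OF c']] o TT2 _ u]) (simp add: N_def)
      have ph: "exp_psum R (scD ?c D) p0 p1 u N \<in> Hom R p0 p1" "exp_psum R (scD ?c D') p0 p1 u N \<in> Hom R p0 p1"
        using psum_hom[OF scD_klin[OF kl] o u] psum_hom[OF scD_klin[OF kl'] o u] by simp_all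
      have eh: "der_exp R (scD ?c D) p0 p1 u \<in> Hom R p0 p1"
        using Ex_hom[OF good_of_cond[OF scD_cond[OF c]] o u] .
      have a3: "hsub R p0 p1 (exp_psum R (scD ?c D) p0 p1 u N) (exp_psum R (scD ?c D') p0 p1 u N) \<in> Fil R n p0 p1"
        by (rule cg_trans[OF o ph(1) eh ph(2) cg_sym[OF o eh ph(1) a1]]) (use a2 em in simp)
      have s1: "exp_psum R (scD ?c D) p0 p1 u N = finsum (HG R p0 p1) (\<lambda>k. smult R p0 p1 (?c ^ k) (?x k)) {..<N}"
        unfolding psum_finsum[OF scD_klin[OF kl] o u]
        by (rule M.finsum_cong') (use scD_pow[OF kl o u] sm_swap[OF o] pow_hom[OF kl o u] o in auto)
      have s2: "exp_psum R (scD ?c D') p0 p1 u N = finsum (HG R p0 p1) (\<lambda>k. smult R p0 p1 (?c ^ k) (?y k)) {..<N}"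
        unfolding psum_finsum[OF scD_klin[OF kl'] o u]
        by (rule M.finsum_cong') (use scD_pow[OF kl' o u] sm_swap[OF o] pow_hom[OF kl' o u] o in auto)
      have "finsum (HG R p0 p1) (\<lambda>k. smult R p0 p1 (?c ^ k) (?b k)) {..<N}
         = finsum (HG R p0 p1) (\<lambda>k. sac.add R p0 p1 (smult R p0 p1 (?c ^ k) (?x k)) (smult R p0 p1 (-1) (smult R p0 p1 (?c ^ k) (?y k)))) {..<N}"
        by (rule M.finsum_cong') (use xh o in \<open>auto simp: hsub_def HGlaws(1)[OF o] sm_swap[OF o]\<close>)
      also have "\<dots> = sac.add R p0 p1 (finsum (HG R p0 p1) (\<lambda>k. smult R p0 p1 (?c ^ k) (?x k)) {..<N})
           (finsum (HG R p0 p1) (\<lambda>k. smult R p0 p1 (-1) (smult R p0 p1 (?c ^ k) (?y k))) {..<N})"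
        using M.finsum_addf[of "\<lambda>k. smult R p0 p1 (?c ^ k) (?x k)" "{..<N}" "\<lambda>k. smult R p0 p1 (-1) (smult R p0 p1 (?c ^ k) (?y k))"]
          xh o by (simp add: Pi_def)
      also have "finsum (HG R p0 p1) (\<lambda>k. smult R p0 p1 (-1) (smult R p0 p1 (?c ^ k) (?y k))) {..<N}
           = smult R p0 p1 (-1) (finsum (HG R p0 p1) (\<lambda>k. smult R p0 p1 (?c ^ k) (?y k)) {..<N})"
        using M.sm_finsum[of "{..<N}" "\<lambda>k. smult R p0 p1 (?c ^ k) (?y k)" "-1"] xh o by (simp add: Pi_def)
      finally have "finsum (HG R p0 p1) (\<lambda>k. smult R p0 p1 (?c ^ k) (?b k)) {..<N}
         = hsub R p0 p1 (exp_psum R (scD ?c D) p0 p1 u N) (exp_psum R (scD ?c D') p0 p1 u N)"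
        unfolding s1 s2 hsub_def .
      then show ?thesis using a3 by simp
    qed
    have "?b 1 \<in> Fil R n p0 p1"
    proof (rule M.poly_coeffs[OF KQ Fil_submod[OF o], where b = ?b and N = N and k = 1])
      show "\<And>k. ?b k \<in> carrier (HG R p0 p1)" using xh by simp
      show "\<And>m. finsum (HG R p0 p1) (\<lambda>k. smult R p0 p1 (of_nat m ^ k) (?b k)) {..<N} \<in> Fil R n p0 p1" by (rule P)
      show "1 < N" by (simp add: N_def)
    qed
    then show "hsub R p0 p1 (D p0 p1 u) (D' p0 p1 u) \<in> Fil R n p0 p1"
      using inv_nat_1 HGlaws(4)[OF o] klinD(1)[OF kl o u] klinD(1)[OF kl' o u] by simp
  qed
qed

end

theorem proposition1p3p3:
  fixes R :: "('o, 'k::comm_ring_1, 'm) sac"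
    and D D' :: "('o, 'm) famap"
  assumes KQ: "\<forall>n::nat. n > 0 \<longrightarrow> (\<exists>r::'k. of_nat n * r = 1)"
    and ksac: "is_KSAC R" and filt: "is_filtered R"
    and C2: "cond_C2 R" and C3: "cond_C3 R"
    and D: "cond_i_iii R D" and D': "cond_i_iii R D'"
  shows "(der_commute R D D' \<longrightarrow>
            cond_i_iii R (der_add R D D') \<and>
            (\<forall>p0\<in>Ob R. \<forall>p1\<in>Ob R. \<forall>u\<in>Hom R p0 p1.
               der_exp R (der_add R D D') p0 p1 u
                 = der_exp R D p0 p1 (der_exp R D' p0 p1 u)))
      \<and> is_Aut R (der_exp R D)
      \<and> ((\<forall>p0\<in>Ob R. \<forall>p1\<in>Ob R. \<forall>u\<in>Hom R p0 p1. der_exp R D p0 p1 u = der_exp R D' p0 p1 u)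
           \<longrightarrow> (\<forall>p0\<in>Ob R. \<forall>p1\<in>Ob R. \<forall>u\<in>Hom R p0 p1. D p0 p1 u = D' p0 p1 u))"
proof -
  interpret S: sacl R by (unfold_locales; fact)
  show ?thesis
    using S.dsum_cond[OF D D'] S.Ex_dsum[OF D D'] S.Ex_Aut[OF D] S.part3[OF D D'] by blast
qed


end
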